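(* Let $r$ be a rational number with $0<r<1$ and $r\neq1/p$ for every integer $p\ge2$, written $r=[m_1,\dots,m_k]$ with $k\ge2$, $m_i\in\mathbb{Z}_{>0}$, $m_k\ge2$, let $n\ge2$ be an integer, and let $(S_1,S_2,S_1,S_2)$ be the decomposition of $CS(r)$ described in the context; put $m=m_1$. (1) If $k$ is even and $s$ is a rational number with $[m_1,\dots,m_k,2n-2]<s<[m_1,\dots,m_{k-1}]$, then $CS(s)$ contains $(m,S_{1e},d\langle S_2,S_1\rangle,S_2,S_{1b},m)$ as a subsequence for some integer $d$ with $1\le d\le 2n-3$, where $(m+1,S_{1e})=(S_{1b},m+1)=S_1$. (2) If $k$ is odd and $s$ is a rational number with $[m_1,\dots,m_{k-1}]<s<[m_1,\dots,m_k,2n-2]$, then $CS(s)$ contains $(m+1,S_{2e},d\langle S_1,S_2\rangle,S_1,S_{2b},m+1)$ as a subsequence for some integer $d$ with $1\le d\le 2n-3$, where $(m,S_{2e})=(S_{2b},m)=S_2$.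
   Context: Continued fractions: $[m_1,\dots,m_k]=1/(m_1+1/(m_2+\cdots+1/m_k))$; when $k-1=1$, $[m_1,\dots,m_{k-1}]=1/m_1$. For $s\in\mathbb{Q}\cup\{\infty\}$, $u_s$ is the cyclically reduced, cyclically alternating word in the free group $F(a,b)$ representing the simple loop of slope $s$ on the 4-punctured 2-bridge sphere in the upper tangle complement (well defined up to cyclic permutation and inversion). For a cyclically reduced cyclic word $(w)$, decompose it cyclically into maximal subwords alternately positive (all exponents $+1$) and negative (all exponents $-1$); $CS(w)$ is the cyclic sequence of their lengths, and $CS(s):=CS(u_s)$. $CS(r)$ consists of $m$ and $m+1$ and has a decomposition $CS(r)=((S_1,S_2,S_1,S_2))$ in which each $S_i$ is symmetric (equal to its reverse) and occurs only twice in $CS(r)$, $S_1$ begins and ends with $m+1$, and $S_2$ begins and ends with $m$; this is the decomposition meant. $d\langle A,B\rangle$ denotes $(A,B,\dots,A,B)$ with $d$ copies of $(A,B)$. "Contains as a subsequence" means occurs as a block of consecutive terms of the cyclic sequence. *)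

theory Defs
  imports Complex_Main
begin

fun cf :: "nat list \<Rightarrow> rat" where
  "cf [] = 0"
| "cf (x # xs) = 1 / (of_nat x + cf xs)"

text \<open>Words in the free group F(a,b), as lists of (generator, exponent) with exponent +1 or -1.\<close>
datatype gen = GA | GB

type_synonym fword = "(gen \<times> int) list"

text \<open>The word u_s for s = q/p (p > 0, gcd 1):
  u_s = a^e1 b^e2 ... a^e(2p-1) b^e(2p), with e_i = (-1)^floor(i q / p).\<close>
definition u :: "rat \<Rightarrow> fword" where
  "u s = (let p = nat (snd (quotient_of s)) in
     map (\<lambda>i. (if odd i then GA else GB,
               if even \<lfloor>of_nat i * s\<rfloor> then (1::int) else -1)) [1..<2*p+1])"

function runs :: "'a list \<Rightarrow> nat list" where
  "runs [] = []"
| "runs (x # xs) = Suc (length (takeWhile (\<lambda>y. y = x) xs)) # runs (dropWhile (\<lambda>y. y = x) xs)"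
  by pat_completeness auto
termination
  by (relation "measure length") (auto simp: le_imp_less_Suc length_dropWhile_le)

text \<open>CS of a cyclic word: rotate the exponent sequence so that it starts at a sign change,
  then take run lengths (a representative of the cyclic sequence).\<close>
definition CS_word :: "fword \<Rightarrow> nat list" where
  "CS_word w = (let e = map snd w; n = length e;
                    j = (LEAST j. j < n \<and> e ! j \<noteq> e ! ((j + n - 1) mod n))
                in runs (rotate j e))"

definition CS :: "rat \<Rightarrow> nat list" where
  "CS s = CS_word (u s)"

definition cyc_contains :: "nat list \<Rightarrow> nat list \<Rightarrow> bool" where
  "cyc_contains L P \<longleftrightarrow> (\<exists>i < length L. length P \<le> length L \<and> take (length P) (rotate i L) = P)"

definition cyc_occ :: "nat list \<Rightarrow> nat list \<Rightarrow> nat" where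
  "cyc_occ L P = card {i. i < length L \<and> length P \<le> length L \<and> take (length P) (rotate i L) = P}"

end

theory Submission
  imports Defs
begin



definition cz :: "int \<Rightarrow> int \<Rightarrow> int" where "cz X q = - ((- X) div q)"
definition rz :: "int \<Rightarrow> int \<Rightarrow> int \<Rightarrow> nat" where
  "rz p q J = nat (cz ((J+1)*p) q - cz (J*p) q)"

lemma cz_ceil: "cz X q = \<lceil>(of_int X / of_int q :: rat)\<rceil>"
proof -
  have e: "-(of_int X / of_int q) = (of_int (-X) / of_int q :: rat)"
    by (simp only: of_int_minus minus_divide_left)
  show ?thesis unfolding cz_def ceiling_def e floor_divide_of_int_eq ..
qed

lemma cz_le_iff: "0 < q \<Longrightarrow> cz X q \<le> Y \<longleftrightarrow> X \<le> Y*q"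
proof -
  assume q: "0 < q"
  have "(of_int X / of_int q :: rat) \<le> of_int Y \<longleftrightarrow> of_int X \<le> (of_int (Y*q) :: rat)"
    using q by (simp add: divide_le_eq)
  also have "\<dots> \<longleftrightarrow> X \<le> Y*q" by (rule of_int_le_iff)
  finally show ?thesis unfolding cz_ceil ceiling_le_iff .
qed

lemma cz_gt_iff: "0 < q \<Longrightarrow> Y < cz X q \<longleftrightarrow> Y*q < X"
proof -
  assume q: "0 < q"
  have "cz X q \<le> Y \<longleftrightarrow> X \<le> Y*q" by (rule cz_le_iff[OF q])
  then show ?thesis by (meson not_le)
qed

lemma cz_add: "0 < q \<Longrightarrow> cz (X + c*q) q = cz X q + c"
proof -
  assume q: "0 < q"
  have "(- (X + c*q)) div q = (-X + (-c)*q) div q" by (simp add: algebra_simps)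
  also have "\<dots> = -c + (-X) div q" using q by (metis add.commute div_mult_self1 less_irrefl)
  finally have "(- (X + c*q)) div q = -c + (-X) div q" .
  then show ?thesis unfolding cz_def by simp
qed

lemma cz_eqI: "0 < q \<Longrightarrow> (a-1)*q < X \<Longrightarrow> X \<le> a*q \<Longrightarrow> cz X q = a"
proof -
  assume q: "0 < q" and h1: "(a-1)*q < X" and h2: "X \<le> a*q"
  have "cz X q \<le> a" using cz_le_iff[OF q] h2 by blast
  moreover have "a - 1 < cz X q" using cz_gt_iff[OF q] h1 by blast
  ultimately show ?thesis by linarith
qed

lemma cz_mono: "0 < q \<Longrightarrow> X \<le> X' \<Longrightarrow> cz X q \<le> cz X' q"
  unfolding cz_def by (simp add: zdiv_mono1)



lemma runs_rep_app:
  assumes "ys = [] \<or> hd ys \<noteq> x"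
  shows "runs (replicate (Suc c) x @ ys) = Suc c # runs ys"
proof -
  have tw: "takeWhile (\<lambda>y. y = x) ys = []" and dw: "dropWhile (\<lambda>y. y = x) ys = ys"
    using assms by (cases ys; auto)+
  have "replicate (Suc c) x @ ys = x # (replicate c x @ ys)" by simp
  moreover have "takeWhile (\<lambda>y. y = x) (replicate c x @ ys) = replicate c x"
    by (subst takeWhile_append2) (auto simp: tw)
  moreover have "dropWhile (\<lambda>y. y = x) (replicate c x @ ys) = ys"
    by (subst dropWhile_append2) (auto simp: dw)
  ultimately show ?thesis by simp
qed

lemma runs_blocks:
  "(\<forall>k<M. c k > 0) \<Longrightarrow> (\<forall>k. a k \<noteq> a (Suc k)) \<Longrightarrow>
   runs (concat (map (\<lambda>k. replicate (c k) (a k)) [0..<M])) = map c [0..<M]"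
proof (induction M arbitrary: c a)
  case 0
  then show ?case by simp
next
  case (Suc M)
  have split: "[0..<Suc M] = 0 # map Suc [0..<M]" by (simp add: map_Suc_upt upt_conv_Cons)
  obtain c0 where c0: "c 0 = Suc c0" using Suc.prems(1) by (metis gr0_implies_Suc zero_less_Suc)
  let ?rest = "concat (map (\<lambda>k. replicate (c (Suc k)) (a (Suc k))) [0..<M])"
  have IH: "runs ?rest = map (\<lambda>k. c (Suc k)) [0..<M]"
    using Suc.IH[of "\<lambda>k. c (Suc k)" "\<lambda>k. a (Suc k)"] Suc.prems by auto
  have hd: "?rest = [] \<or> hd ?rest \<noteq> a 0"
  proof (cases M)
    case 0 then show ?thesis by simp
  next
    case (Suc M')
    then have "[0..<M] = 0 # map Suc [0..<M']" by (simp add: map_Suc_upt upt_conv_Cons)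
    moreover obtain c1 where "c (Suc 0) = Suc c1" using Suc.prems(1) \<open>M = Suc M'\<close>
      by (metis gr0_implies_Suc less_Suc_eq_0_disj zero_less_Suc)
    ultimately have "hd ?rest = a 1" by simp
    then show ?thesis using Suc.prems(2) by (metis One_nat_def)
  qed
  have "concat (map (\<lambda>k. replicate (c k) (a k)) [0..<Suc M]) = replicate (Suc c0) (a 0) @ ?rest"
    using c0 unfolding split by (simp add: comp_def del: upt_Suc)
  then show ?case using runs_rep_app[OF hd] IH c0 unfolding split by (simp add: comp_def del: upt_Suc)
qed


lemma upt_concat:
  assumes "\<And>i j. i \<le> j \<Longrightarrow> j \<le> M \<Longrightarrow> s i \<le> (s j :: nat)"
  shows "[s 0..<s M] = concat (map (\<lambda>k. [s k..<s (Suc k)]) [0..<M])"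
  using assms
proof (induction M)
  case 0 then show ?case by simp
next
  case (Suc M)
  have "[s 0..<s (Suc M)] = [s 0..<s M] @ [s M..<s (Suc M)]"
    using Suc.prems[of 0 M] Suc.prems[of M "Suc M"] upt_add_eq_append[of "s 0" "s M" "s (Suc M) - s M"] by simp
  then show ?case using Suc by simp
qed

lemma map_const_on: "(\<And>x. x \<in> set xs \<Longrightarrow> f x = c) \<Longrightarrow> map f xs = replicate (length xs) c"
  by (induction xs) auto


lemma div_eqI': assumes "0 < p" "k*p \<le> x" "x < (k+1)*p" shows "x div p = (k::int)"
proof -
  have "x div p = \<lfloor>(of_int x / of_int p :: rat)\<rfloor>" by (simp only: floor_divide_of_int_eq)
  also have "\<dots> = k"
  proof (rule floor_unique)
    show "of_int k \<le> (of_int x / of_int p :: rat)" using assms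
      by (simp add: le_divide_eq flip: of_int_mult of_int_le_iff)
    have "rat_of_int x < rat_of_int ((k+1)*p)" using assms(3) by (simp only: of_int_less_iff)
    then show "(of_int x / of_int p :: rat) < of_int k + 1" using assms(1)
      by (simp add: divide_less_eq)
  qed
  finally show ?thesis .
qed
lemma div_mult_le': "0 < p \<Longrightarrow> (x div p) * p \<le> (x::int)"
  by (metis div_mult_mod_eq le_add_same_cancel1 pos_mod_sign)
lemma lt_div_succ: "0 < p \<Longrightarrow> x < (x div p + 1) * p" for x p :: int
  by (metis div_mult_mod_eq add.commute distrib_right mult_1 add_less_cancel_left pos_mod_bound)


lemma sq_facts:
  assumes qs: "quotient_of s = (q, p)" and "0 < s" "s < 1"
  shows "s = of_int q / of_int p" "0 < p" "0 < q" "q < p"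
proof -
  show s: "s = of_int q / of_int p" using quotient_of_div[OF qs] .
  show p: "0 < p" using quotient_of_denom_pos[OF qs] .
  have "0 < (of_int q / of_int p :: rat)" using s assms(2) by simp
  then show "0 < q" using p by (simp add: zero_less_divide_iff)
  have "(of_int q / of_int p :: rat) < 1" using s assms(3) by simp
  then show "q < p" using p by (simp add: divide_less_eq)
qed

lemma floor_is:
  fixes s :: rat
  assumes "s = of_int q / of_int p" "0 < p"
  shows "\<lfloor>of_nat i * s\<rfloor> = (int i * q) div p"
proof -
  have "of_nat i * s = (of_int (int i * q) / of_int p :: rat)" using assms by simp
  then show ?thesis by (simp only: floor_divide_of_int_eq)
qed

lemma CS_form:
  assumes qs: "quotient_of s = (q, p)" and s0: "0 < s" and s1: "s < 1"
  shows "\<exists>K. CS s = map (\<lambda>k. rz p q (K + int k)) [0..<2 * nat q]"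
proof -
  note f = sq_facts[OF assms]
  have p0: "0 < p" and q0: "0 < q" and qp: "q < p" using f by auto
  define n where "n = 2 * nat p"
  define lev where "lev i = (int i + 1) * q div p" for i :: nat
  define sg where "sg z = (if even z then 1 else -1 :: int)" for z :: int
  define e where "e = map snd (u s)"
  have u_eq: "u s = map (\<lambda>i. (if odd i then GA else GB,
               if even \<lfloor>of_nat i * s\<rfloor> then (1::int) else -1)) [1..<2*nat p+1]"
    unfolding u_def qs by simp
  have e_len: "length e = n" unfolding e_def u_eq n_def by simp
  have e_nth: "e ! i = sg (lev i)" if "i < n" for i
  proof -
    have "e ! i = (if even \<lfloor>of_nat (i+1) * s\<rfloor> then (1::int) else -1)"
      using that unfolding e_def u_eq n_def by (simp add: nth_upt algebra_simps del: upt_Suc)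
    also have "\<lfloor>of_nat (i+1) * s\<rfloor> = lev i" unfolding lev_def
      using floor_is[OF f(1) p0, of "i+1"] by (simp add: add.commute)
    finally show ?thesis unfolding sg_def by simp
  qed
  have lev_mono: "lev i \<le> lev i'" if "i \<le> i'" for i i'
    unfolding lev_def using that q0 p0 by (intro zdiv_mono1 mult_right_mono) auto
  have lev_step: "lev (Suc i) \<le> lev i + 1" for i
  proof -
    have "(int (Suc i) + 1) * q \<le> (int i + 1) * q + p" using qp by (simp add: algebra_simps)
    then have "(int (Suc i) + 1) * q div p \<le> ((int i + 1) * q + p) div p"
      using p0 by (intro zdiv_mono1) auto
    also have "\<dots> = lev i + 1" unfolding lev_def using p0 by simp
    finally show ?thesis unfolding lev_def .
  qed
  define P where "P j \<longleftrightarrow> j < n \<and> e ! j \<noteq> e ! ((j + n - 1) mod n)" for j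
  have CSe: "CS s = runs (rotate (LEAST j. P j) e)"
    unfolding CS_def CS_word_def Let_def P_def by (simp add: e_def[symmetric] e_len)
  have exP: "\<exists>j. P j"
  proof -
    define a where "a = (p - 1) div q"
    have a1: "a * q \<le> p - 1" "p - 1 < (a+1) * q" unfolding a_def using div_mult_le'[OF q0, of "p-1"] lt_div_succ[OF q0, of "p-1"] by auto
    have "1 * q \<le> p - 1" using qp by simp
    then have "1 * q < (a+1) * q" using a1(2) by (rule le_less_trans)
    then have "1 < a + 1" by (rule mult_right_less_imp_less) (use q0 in simp)
    then have "1 \<le> a" by simp
    define j0 where "j0 = nat a"
    have j0a: "int j0 = a" using \<open>1 \<le> a\<close> unfolding j0_def by simp
    have "a \<le> p - 1"
    proof -
      have "a * 1 \<le> a * q" using \<open>1 \<le> a\<close> q0 by (intro mult_left_mono) auto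
      then show ?thesis using a1(1) by simp
    qed
    then have j0n: "j0 < n" unfolding n_def using j0a p0 by linarith
    have l1: "lev j0 = 1" unfolding lev_def j0a
      by (rule div_eqI') (use a1 p0 qp in \<open>auto simp: algebra_simps\<close>)
    have "int (j0 - 1) + 1 = a" using j0a \<open>1 \<le> a\<close> by (simp add: of_nat_diff)
    then have l0': "lev (j0 - 1) = a * q div p" unfolding lev_def by simp
    have "0 \<le> a * q" using \<open>1 \<le> a\<close> q0 by simp
    then have "a * q div p = 0" using a1(1) p0 by (intro div_eqI') auto
    then have l0: "lev (j0 - 1) = 0" using l0' by simp
    have "j0 \<ge> 1" using j0a \<open>1 \<le> a\<close> by simp
    then have eq: "j0 + n - 1 = (j0 - 1) + n" by simp
    have "((j0 - 1) + n) mod n = j0 - 1" using j0n by simp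
    then have "(j0 + n - 1) mod n = j0 - 1" by (simp only: eq)
    then have "P j0" unfolding P_def using j0n e_nth[of j0] e_nth[of "j0-1"] l1 l0
      by (simp add: sg_def)
    then show ?thesis ..
  qed
  define j where "j = (LEAST j. P j)"
  have Pj: "P j" unfolding j_def using exP by (rule LeastI_ex)
  then have jn: "j < n" and ej: "e ! j \<noteq> e ! ((j + n - 1) mod n)" unfolding P_def by auto
  have j1: "1 \<le> j"
  proof (rule ccontr)
    assume "\<not> 1 \<le> j"
    then have j0: "j = 0" by simp
    have n1: "1 \<le> n" unfolding n_def using p0 by simp
    have "lev 0 = 0" unfolding lev_def by (rule div_eqI') (use p0 q0 qp in auto)
    moreover have "lev (n - 1) = 2 * q" unfolding lev_def
      by (rule div_eqI') (use p0 q0 n1 in \<open>auto simp: n_def of_nat_diff algebra_simps\<close>)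
    ultimately have "e ! 0 = e ! (n - 1)" using e_nth[of 0] e_nth[of "n-1"] n1 by (simp add: sg_def)
    then show False using ej j0 n1 by simp
  qed
  have jm: "(j + n - 1) mod n = j - 1" using j1 jn by (simp add: mod_if)
  define K where "K = lev j"
  have levj1: "lev (j - 1) = K - 1"
  proof -
    have "lev (j-1) \<le> K" "K \<le> lev (j-1) + 1" unfolding K_def
      using lev_mono[of "j-1" j] lev_step[of "j-1"] j1 by auto
    moreover have "lev (j-1) \<noteq> K" using ej jm e_nth[of j] e_nth[of "j-1"] jn unfolding K_def by auto
    ultimately show ?thesis by linarith
  qed
  have czK: "cz (K * p) q = int j + 1"
  proof (rule cz_eqI[OF q0])
    show "K * p \<le> (int j + 1) * q" unfolding K_def lev_def using div_mult_le' p0 by auto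
    have "int j * q < (lev (j-1) + 1) * p" unfolding lev_def using lt_div_succ[OF p0] j1 by (simp add: of_nat_diff)
    then show "(int j + 1 - 1) * q < K * p" using levj1 by simp
  qed
  define g where "g i = sg ((int (i + j) + 1) * q div p)" for i
  have rot: "rotate j e = map g [0..<n]"
  proof (rule nth_equalityI)
    show "length (rotate j e) = length (map g [0..<n])" using e_len by simp
    fix i assume "i < length (rotate j e)"
    then have i: "i < n" using e_len by simp
    have r: "rotate j e ! i = e ! ((i + j) mod n)" using i e_len by (simp add: nth_rotate add.commute)
    show "rotate j e ! i = map g [0..<n] ! i"
    proof (cases "i + j < n")
      case True
      then show ?thesis using r e_nth[of "i+j"] i unfolding g_def lev_def by simp
    next
      case False
      then have m: "(i + j) mod n = i + j - n" using i jn by (simp add: mod_if)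
      have lt: "i + j - n < n" using i jn by simp
      have h: "int (i + j - n) + 1 = (int (i+j) + 1) + (- 2 * p)" using False p0 unfolding n_def
        by (simp add: of_nat_diff)
      have "(int (i + j - n) + 1) * q = ((int (i+j) + 1) + (- 2 * p)) * q" unfolding h ..
      also have "\<dots> = (int (i+j) + 1) * q + (- 2 * q) * p" by (simp add: algebra_simps)
      finally have eq: "(int (i + j - n) + 1) * q = (int (i+j) + 1) * q + (- 2 * q) * p" .
      have "lev (i + j - n) = ((int (i+j) + 1) * q + (- 2 * q) * p) div p"
        unfolding lev_def eq ..
      also have "\<dots> = - 2 * q + (int (i+j) + 1) * q div p"
        by (rule div_mult_self1) (use p0 in simp)
      finally have "lev (i + j - n) = (int (i+j) + 1) * q div p + (- 2 * q)" by simp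
      then have "sg (lev (i + j - n)) = g i" unfolding g_def sg_def by simp
      then show ?thesis using r m e_nth[OF lt] i by simp
    qed
  qed
  define S where "S k = nat (cz ((K + int k) * p) q - int j - 1)" for k :: nat
  have czmono: "cz ((K + int k) * p) q \<ge> int j + 1" for k
  proof -
    have "K * p \<le> (K + int k) * p" using p0 by simp
    then show ?thesis using czK cz_mono[OF q0] by metis
  qed
  have Sint: "int (S k) = cz ((K + int k) * p) q - int j - 1" for k
    unfolding S_def using czmono[of k] by simp
  have S0: "S 0 = 0" using Sint[of 0] czK by simp
  have Sn: "S (2 * nat q) = n"
  proof -
    have "(K + int (2 * nat q)) * p = K * p + (2 * p) * q" using q0 by (simp add: algebra_simps)
    then have "cz ((K + int (2 * nat q)) * p) q = int j + 1 + 2 * p" using cz_add[OF q0] czK by simp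
    then have "int (S (2 * nat q)) = 2 * p" using Sint by simp
    then show ?thesis unfolding n_def using p0 by simp
  qed
  have Smono: "S k \<le> S k'" if "k \<le> k'" for k k'
  proof -
    have "(K + int k) * p \<le> (K + int k') * p" using p0 that by simp
    then have "cz ((K + int k) * p) q \<le> cz ((K + int k') * p) q" using cz_mono[OF q0] by blast
    then show ?thesis using Sint[of k] Sint[of k'] by simp
  qed
  have blk: "g i = sg (K + int k)" if "S k \<le> i" "i < S (Suc k)" for i k
  proof -
    have "cz ((K + int k) * p) q \<le> int i + int j + 1" using that(1) Sint[of k] by simp
    then have a: "(K + int k) * p \<le> (int i + int j + 1) * q" using cz_le_iff[OF q0] by blast
    have "int i + int j + 1 < cz ((K + int (Suc k)) * p) q" using that(2) Sint[of "Suc k"] by simp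
    then have b: "(int i + int j + 1) * q < (K + int k + 1) * p" using cz_gt_iff[OF q0] by (simp add: add.assoc add.commute add.left_commute)
    have "(int (i + j) + 1) * q div p = K + int k"
      by (rule div_eqI'[OF p0]) (use a b in simp_all)
    then show ?thesis unfolding g_def by simp
  qed
  have blen: "S (Suc k) - S k = rz p q (K + int k)" for k
  proof -
    have "int (S (Suc k)) - int (S k) = cz ((K + int k + 1) * p) q - cz ((K + int k) * p) q"
      using Sint[of k] Sint[of "Suc k"] by (simp add: add.assoc add.commute add.left_commute)
    then show ?thesis unfolding rz_def using Smono[of k "Suc k"] by (simp add: algebra_simps)
  qed
  have "[0..<n] = concat (map (\<lambda>k. [S k..<S (Suc k)]) [0..<2 * nat q])"
    using upt_concat[of "2 * nat q" S] Smono S0 Sn by simp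
  then have "map g [0..<n] = concat (map (\<lambda>k. map g [S k..<S (Suc k)]) [0..<2 * nat q])"
    by (simp add: map_concat comp_def)
  also have "\<dots> = concat (map (\<lambda>k. replicate (rz p q (K + int k)) (sg (K + int k))) [0..<2 * nat q])"
  proof (rule arg_cong[where f = concat], rule map_cong[OF refl])
    fix k assume "k \<in> set [0..<2 * nat q]"
    have "map g [S k..<S (Suc k)] = replicate (length [S k..<S (Suc k)]) (sg (K + int k))"
      by (rule map_const_on) (use blk in auto)
    then show "map g [S k..<S (Suc k)] = replicate (rz p q (K + int k)) (sg (K + int k))"
      using blen by simp
  qed
  finally have me: "map g [0..<n] = concat (map (\<lambda>k. replicate (rz p q (K + int k)) (sg (K + int k))) [0..<2 * nat q])" .
  have rzpos: "0 < rz p q J" for J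
  proof -
    have "J * p + 1 * q \<le> (J + 1) * p" using qp by (simp add: algebra_simps)
    then have "cz (J * p + 1 * q) q \<le> cz ((J + 1) * p) q" using cz_mono[OF q0] by blast
    then have "cz (J * p) q + 1 \<le> cz ((J + 1) * p) q" using cz_add[OF q0, of "J * p" 1] by simp
    then show ?thesis unfolding rz_def by simp
  qed
  have sgd: "sg (K + int k) \<noteq> sg (K + int (Suc k))" for k unfolding sg_def by simp
  have "runs (rotate j e) = map (\<lambda>k. rz p q (K + int k)) [0..<2 * nat q]"
    unfolding rot me by (rule runs_blocks) (use rzpos sgd in auto)
  then show ?thesis using CSe unfolding j_def by (intro exI[of _ K]) simp
qed


lemma rz_period: "0 < q \<Longrightarrow> rz p q (J + c * q) = rz p q J"
proof -
  assume q: "0 < q"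
  have a: "(J + c * q + 1) * p = (J + 1) * p + (c * p) * q" by (simp add: algebra_simps)
  have b: "(J + c * q) * p = J * p + (c * p) * q" by (simp add: algebra_simps)
  show ?thesis unfolding rz_def a b cz_add[OF q] by simp
qed

lemma rz_mod: assumes "0 < q" "q dvd m" "J mod m = J' mod m" shows "rz p q J = rz p q J'"
proof -
  obtain x where x: "m = q * x" using assms(2) by blast
  have "m dvd (J - J')" using assms(3) by (simp add: mod_eq_dvd_iff)
  then obtain y where "J - J' = m * y" by blast
  then have "J = J' + (x * y) * q" using x by (simp add: algebra_simps)
  then show ?thesis using rz_period[OF assms(1)] by simp
qed

lemma window_at:
  fixes CSl :: "nat list" and S :: "nat list"
  assumes q: "0 < q" and CSl: "CSl = map (\<lambda>k. rz p q (K + int k)) [0..<2 * nat q]"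
    and i: "i < 2 * nat q" and im: "(K + int i) mod q = J mod q"
    and l: "length S \<le> 2 * nat q" and S: "\<forall>t < length S. S ! t = rz p q (J + int t)"
  shows "take (length S) (rotate i CSl) = S"
proof (rule nth_equalityI)
  have len: "length CSl = 2 * nat q" using CSl by simp
  show "length (take (length S) (rotate i CSl)) = length S" using len l by simp
  fix t assume "t < length (take (length S) (rotate i CSl))"
  then have t: "t < length S" by simp
  then have t2: "t < 2 * nat q" using l by simp
  have "take (length S) (rotate i CSl) ! t = rotate i CSl ! t" using t by simp
  also have "\<dots> = CSl ! ((t + i) mod (2 * nat q))" using t2 len by (simp add: nth_rotate add.commute)
  also have "\<dots> = rz p q (K + int ((t + i) mod (2 * nat q)))"
  proof -
    have "(t + i) mod (2 * nat q) < 2 * nat q" using q by simp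
    then show ?thesis using CSl by (simp del: upt_Suc)
  qed
  also have "\<dots> = rz p q (J + int t)"
  proof (rule rz_mod[OF q, of q])
    show "q dvd q" by simp
    have "int ((t + i) mod (2 * nat q)) = (int t + int i) mod (2 * q)" using q
      by (simp add: zmod_int)
    moreover have "(K + X mod (2*q)) mod q = (K + X) mod q" for X
    proof -
      have "(K + X mod (2*q)) mod q = (K + (X mod (2*q)) mod q) mod q" by (simp add: mod_add_right_eq)
      also have "(X mod (2*q)) mod q = X mod q" by (rule mod_mod_cancel) simp
      also have "(K + X mod q) mod q = (K + X) mod q" by (simp add: mod_add_right_eq)
      finally show ?thesis .
    qed
    ultimately have "(K + int ((t + i) mod (2 * nat q))) mod q = (K + int t + int i) mod q"
      by (simp add: add.assoc)
    also have "\<dots> = (J + int t) mod q" using im by (metis add.commute add.left_commute mod_add_left_eq)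
    finally show "(K + int ((t + i) mod (2 * nat q))) mod q = (J + int t) mod q" .
  qed
  finally show "take (length S) (rotate i CSl) ! t = S ! t" using S t by simp
qed


lemma idx_mod:
  assumes q: "0 < (q::int)"
  shows "nat ((J - K) mod q) < nat q" "(K + int (nat ((J - K) mod q))) mod q = J mod q"
    "(K + int (nat ((J - K) mod q) + nat q)) mod q = J mod q"
proof -
  show "nat ((J - K) mod q) < nat q" using q by simp
  have e: "int (nat ((J - K) mod q)) = (J - K) mod q" using q by simp
  show a: "(K + int (nat ((J - K) mod q))) mod q = J mod q" unfolding e
    by (metis add.commute diff_add_cancel mod_add_left_eq)
  have "K + int (nat ((J - K) mod q) + nat q) = (K + int (nat ((J - K) mod q))) + q" using q by simp
  then have "(K + int (nat ((J - K) mod q) + nat q)) mod q = (K + int (nat ((J - K) mod q))) mod q"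
    by (simp only: mod_add_self2)
  then show "(K + int (nat ((J - K) mod q) + nat q)) mod q = J mod q" using a by simp
qed

lemma contains_at:
  assumes q: "0 < q" and CSl: "CSl = map (\<lambda>k. rz p q (K + int k)) [0..<2 * nat q]"
    and l: "length S \<le> 2 * nat q" and S: "\<forall>t < length S. S ! t = rz p q (J + int t)"
  shows "cyc_contains CSl S"
proof -
  define i where "i = nat ((J - K) mod q)"
  have "i < nat q" unfolding i_def by (rule idx_mod(1)[OF q])
  then have i: "i < 2 * nat q" by simp
  have "take (length S) (rotate i CSl) = S"
    by (rule window_at[OF q CSl i _ l S]) (use idx_mod(2)[OF q, of K J] in \<open>simp add: i_def\<close>)
  then show ?thesis unfolding cyc_contains_def using i l CSl by auto
qed

lemma occ_not2:
  assumes q: "0 < q" and CSl: "CSl = map (\<lambda>k. rz p q (K + int k)) [0..<2 * nat q]"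
    and l: "length S \<le> 2 * nat q" and S: "\<forall>t < length S. S ! t = rz p q (J + int t)"
    and S': "\<forall>t < length S. S ! t = rz p q (J' + int t)" and ne: "J mod q \<noteq> J' mod q"
  shows "cyc_occ CSl S \<noteq> 2"
proof -
  define A where "A = {i. i < length CSl \<and> length S \<le> length CSl \<and> take (length S) (rotate i CSl) = S}"
  have lenC: "length CSl = 2 * nat q" using CSl by simp
  define i1 where "i1 = nat ((J - K) mod q)"
  define i3 where "i3 = nat ((J' - K) mod q)"
  have inA: "i \<in> A" if "i < 2 * nat q" "(K + int i) mod q = J0 mod q"
     "\<forall>t < length S. S ! t = rz p q (J0 + int t)" for i J0
    unfolding A_def using window_at[OF q CSl that(1) that(2) l that(3)] that(1) lenC l by simp
  have b1: "i1 < nat q" "i3 < nat q" unfolding i1_def i3_def by (rule idx_mod(1)[OF q])+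
  have m1: "i1 \<in> A" by (rule inA[OF _ idx_mod(2)[OF q, of K J] S, folded i1_def]) (use b1 in simp)
  have m2: "i1 + nat q \<in> A" by (rule inA[OF _ idx_mod(3)[OF q, of K J] S, folded i1_def]) (use b1 in simp)
  have m3: "i3 \<in> A" by (rule inA[OF _ idx_mod(2)[OF q, of K J'] S', folded i3_def]) (use b1 in simp)
  have m4: "i3 + nat q \<in> A" by (rule inA[OF _ idx_mod(3)[OF q, of K J'] S', folded i3_def]) (use b1 in simp)
  have "i1 \<noteq> i3" using ne idx_mod(2)[OF q, of K J] idx_mod(2)[OF q, of K J'] unfolding i1_def i3_def by metis
  moreover note b1
  ultimately have "card {i1, i1 + nat q, i3, i3 + nat q} = 4" by auto
  moreover have "{i1, i1 + nat q, i3, i3 + nat q} \<subseteq> A" using m1 m2 m3 m4 by auto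
  moreover have "finite A" unfolding A_def by auto
  ultimately have "4 \<le> card A" by (metis card_mono)
  then show ?thesis unfolding cyc_occ_def A_def by simp
qed


lemma dvd_small: "(N::int) dvd z \<Longrightarrow> \<bar>z\<bar> < N \<Longrightarrow> z = 0"
proof (rule ccontr)
  assume a: "N dvd z" "\<bar>z\<bar> < N" "z \<noteq> 0"
  have "\<bar>N\<bar> \<le> \<bar>z\<bar>" by (rule dvd_imp_le_int[OF a(3) a(1)])
  then show False using a(2) by simp
qed

lemma dvd_uniq: "(N::int) dvd a + x \<Longrightarrow> N dvd a + y \<Longrightarrow> 0 \<le> x \<Longrightarrow> x < N \<Longrightarrow> 0 \<le> y \<Longrightarrow> y < N \<Longrightarrow> x = y"
proof -
  assume a: "N dvd a + x" "N dvd a + y" "0 \<le> x" "x < N" "0 \<le> y" "y < N"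
  have "N dvd (a + x) - (a + y)" using a(1,2) by (rule dvd_diff)
  then have "N dvd x - y" by simp
  moreover have "\<bar>x - y\<bar> < N" using a(3-6) by (simp add: abs_less_iff)
  ultimately have "x - y = 0" by (rule dvd_small)
  then show ?thesis by simp
qed

lemma rz_letter:
  assumes N: "0 < N" and D0: "0 \<le> D"
  shows "rz D N J = (if (-(J*D)) mod N < D mod N then nat (D div N) + 1 else nat (D div N))"
proof -
  define X where "X = -(J*D)"
  define a where "a = X div N"
  define b where "b = X mod N"
  define m where "m = D div N"
  define g where "g = D mod N"
  have m0: "0 \<le> m" unfolding m_def using N D0 by (simp add: pos_imp_zdiv_nonneg_iff)
  have Xe: "X = a * N + b" unfolding a_def b_def by simp
  have De: "D = m * N + g" unfolding m_def g_def by simp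
  have b0: "0 \<le> b" "b < N" unfolding b_def using N by auto
  have g0: "0 \<le> g" "g < N" unfolding g_def using N by auto
  have cz1: "cz (J*D) N = - a" unfolding cz_def a_def X_def by simp
  have e2: "-((J+1)*D) = (a - m) * N + (b - g)" using Xe De unfolding X_def by (simp add: algebra_simps)
  have cz2: "cz ((J+1)*D) N = m - a - (b - g) div N"
  proof -
    have "(-((J+1)*D)) div N = ((b - g) + (a - m) * N) div N" unfolding e2 by (simp add: add.commute)
    also have "\<dots> = (a - m) + (b - g) div N" using N by simp
    finally show ?thesis unfolding cz_def by simp
  qed
  show ?thesis
  proof (cases "b < g")
    case True
    have "(b - g) div N = -1" by (rule div_eqI'[OF N]) (use True b0 g0 in auto)
    then show ?thesis unfolding rz_def cz1 cz2 using True unfolding X_def[symmetric] b_def[symmetric] g_def[symmetric] m_def[symmetric]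
      using m0 by (simp add: nat_add_distrib)
  next
    case False
    have "(b - g) div N = 0" by (rule div_eqI'[OF N]) (use False b0 g0 in auto)
    then show ?thesis unfolding rz_def cz1 cz2 using False unfolding X_def[symmetric] b_def[symmetric] g_def[symmetric] m_def[symmetric]
      by simp
  qed
qed


lemma identify:
  fixes N D K T0 ls :: int and S1 S2 CSl :: "nat list"
  assumes N2: "2 \<le> N" and D0: "0 \<le> D" and cop: "coprime D N"
    and ls: "1 \<le> ls" "ls < N" "(ls * D) mod N = 1"
    and CSl: "CSl = map (\<lambda>k. rz D N (K + int k)) [0..<2 * nat N]"
    and S1: "\<forall>t<length S1. S1 ! t = rz D N (T0 + int t)"
    and S2: "\<forall>t<length S2. S2 ! t = rz D N (T0 + int (length S1) + int t)"
    and len: "int (length S1) + int (length S2) = N" "S1 \<noteq> []" "S2 \<noteq> []"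
    and occ1: "cyc_occ CSl S1 = 2" and occ2: "cyc_occ CSl S2 = 2"
    and hd2: "hd S2 = nat (D div N)"
  shows "N dvd T0 \<and> int (length S1) = ls"
proof -
  have N0: "0 < N" using N2 by simp
  define bb where "bb J = (-(J*D)) mod N" for J
  define g where "g = D mod N"
  define m where "m = nat (D div N)"
  define l1 where "l1 = int (length S1)"
  define l2 where "l2 = int (length S2)"
  have a1: "length S1 \<ge> 1" using len(2) by (cases S1) auto
  have a2: "length S2 \<ge> 1" using len(3) by (cases S2) auto
  have l12: "l1 + l2 = N" using len(1) unfolding l1_def l2_def .
  have l1p: "1 \<le> l1" "l1 < N" and l2p: "1 \<le> l2" "l2 < N"
    using a1 a2 l12 unfolding l1_def l2_def by linarith+
  have bb0: "0 \<le> bb J" "bb J < N" for J unfolding bb_def using N0 by auto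
  have g0: "0 \<le> g" "g < N" unfolding g_def using N0 by auto
  have cop': "coprime N D" using cop by (simp add: coprime_commute)
  have g1: "1 \<le> g"
  proof (rule ccontr)
    assume "\<not> 1 \<le> g"
    then have "g = 0" using g0 by simp
    then have "N dvd D" unfolding g_def by (simp add: mod_eq_0_iff_dvd)
    then have "is_unit N" by (rule coprime_common_divisor[OF cop' dvd_refl])
    then show False using N2 by simp
  qed
  have letter: "rz D N J = (if bb J < g then m + 1 else m)" for J
    unfolding bb_def g_def m_def using rz_letter[OF N0 D0] by simp
  have dvdD: "N dvd z * D \<longleftrightarrow> N dvd z" for z
    using cop' by (simp add: coprime_dvd_mult_left_iff)
  have L0: "bb J = 0 \<longleftrightarrow> N dvd J" for J
  proof -
    have "bb J = 0 \<longleftrightarrow> N dvd (-(J*D))" unfolding bb_def by (simp add: mod_eq_0_iff_dvd)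
    also have "\<dots> \<longleftrightarrow> N dvd J" using dvdD by simp
    finally show ?thesis .
  qed
  have Lg: "bb J = g \<longleftrightarrow> N dvd (J + 1)" for J
  proof -
    have "bb J = g \<longleftrightarrow> (-(J*D)) mod N = D mod N" unfolding bb_def g_def ..
    also have "\<dots> \<longleftrightarrow> N dvd (-(J*D) - D)" by (simp add: mod_eq_dvd_iff)
    also have "-(J*D) - D = - ((J+1)*D)" by (simp add: algebra_simps)
    also have "N dvd - ((J+1)*D) \<longleftrightarrow> N dvd (J+1)" using dvdD by simp
    finally show ?thesis .
  qed
  have "(ls*D) mod N = 1 mod N" using ls(3) N2 by simp
  then have lsD: "N dvd (ls * D - 1)" by (simp only: mod_eq_dvd_iff)
  have LN1: "bb J = N - 1 \<longleftrightarrow> N dvd (J - ls)" for J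
  proof -
    have "(N - 1) = (-1) mod N" using N2 by (simp add: zmod_minus1)
    then have "bb J = N - 1 \<longleftrightarrow> (-(J*D)) mod N = (-1) mod N" unfolding bb_def by simp
    also have "\<dots> \<longleftrightarrow> N dvd (-(J*D) - (-1))" by (simp add: mod_eq_dvd_iff)
    also have "\<dots> \<longleftrightarrow> N dvd ((ls - J) * D)"
    proof -
      have "(ls - J) * D = (-(J*D) - (-1)) + (ls * D - 1)" by (simp add: algebra_simps)
      then show ?thesis using lsD by (metis dvd_add_left_iff)
    qed
    also have "\<dots> \<longleftrightarrow> N dvd (J - ls)" using dvdD by (metis dvd_minus_iff minus_diff_eq)
    finally show ?thesis .
  qed
  have Lg1: "bb J = g - 1 \<longleftrightarrow> N dvd (J + 1 - ls)" for J
  proof -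
    have "(D - 1) mod N = (D mod N - 1 mod N) mod N" by (simp add: mod_diff_eq)
    also have "1 mod N = 1" using N2 by simp
    also have "(D mod N - 1) mod N = g - 1" unfolding g_def[symmetric] using g1 g0 by simp
    finally have "g - 1 = (D - 1) mod N" by simp
    then have "bb J = g - 1 \<longleftrightarrow> (-(J*D)) mod N = (D - 1) mod N" unfolding bb_def by simp
    also have "\<dots> \<longleftrightarrow> N dvd (-(J*D) - (D - 1))" by (simp add: mod_eq_dvd_iff)
    also have "\<dots> \<longleftrightarrow> N dvd ((ls - J - 1) * D)"
    proof -
      have "(ls - J - 1) * D = (-(J*D) - (D - 1)) + (ls * D - 1)" by (simp add: algebra_simps)
      then show ?thesis using lsD by (metis dvd_add_left_iff)
    qed
    also have "\<dots> \<longleftrightarrow> N dvd (J + 1 - ls)" using dvdD by (metis dvd_minus_iff minus_diff_eq diff_diff_eq)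
    finally show ?thesis .
  qed
  have shp: "bb (J + ls) = bb J - 1" if "bb J \<noteq> 0" for J
  proof -
    have "-((J + ls) * D) = -(J*D) - ls*D" by (simp add: algebra_simps)
    then have "bb (J + ls) = ((-(J*D)) mod N - (ls*D) mod N) mod N" unfolding bb_def by (simp add: mod_diff_eq)
    also have "\<dots> = (bb J - 1) mod N" unfolding bb_def using ls(3) by simp
    also have "\<dots> = bb J - 1" using that bb0[of J] by simp
    finally show ?thesis .
  qed
  have shm: "bb (J - ls) = bb J + 1" if "bb J \<noteq> N - 1" for J
  proof -
    have "-((J - ls) * D) = -(J*D) + ls*D" by (simp add: algebra_simps)
    then have "bb (J - ls) = ((-(J*D)) mod N + (ls*D) mod N) mod N" unfolding bb_def by (simp add: mod_add_eq)
    also have "\<dots> = (bb J + 1) mod N" unfolding bb_def using ls(3) by simp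
    also have "\<dots> = bb J + 1" using that bb0[of J] by simp
    finally show ?thesis .
  qed
  have lenS: "length S \<le> 2 * nat N" if "int (length S) < N" for S :: "nat list"
    using that by linarith
  have nls: "J mod N \<noteq> (J + ls) mod N" "J mod N \<noteq> (J - ls) mod N" for J
  proof -
    have "\<not> N dvd ls"
    proof
      assume "N dvd ls"
      moreover have "\<bar>ls\<bar> < N" using ls(1,2) by simp
      ultimately have "ls = 0" by (rule dvd_small)
      then show False using ls(1) by simp
    qed
    then show "J mod N \<noteq> (J + ls) mod N" "J mod N \<noteq> (J - ls) mod N"
      by (auto simp: mod_eq_dvd_iff)
  qed
  have occA: "\<exists>k<length S. N dvd J + int k \<or> N dvd J + int k + 1"
    if W: "\<forall>t<length S. S ! t = rz D N (J + int t)" and O: "cyc_occ CSl S = 2" and L: "int (length S) < N"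
    for S :: "nat list" and J
  proof (rule ccontr)
    assume "\<not> ?thesis"
    then have nb: "bb (J + int k) \<noteq> 0 \<and> bb (J + int k) \<noteq> g" if "k < length S" for k
      using that L0 Lg by (auto simp: add.assoc)
    have W': "\<forall>t<length S. S ! t = rz D N (J + ls + int t)"
    proof (intro allI impI)
      fix t assume t: "t < length S"
      have e: "J + ls + int t = (J + int t) + ls" by simp
      have "bb (J + ls + int t) = bb (J + int t) - 1" unfolding e using shp nb[OF t] by simp
      then have "rz D N (J + ls + int t) = rz D N (J + int t)" unfolding letter using nb[OF t] by auto
      then show "S ! t = rz D N (J + ls + int t)" using W t by simp
    qed
    have "cyc_occ CSl S \<noteq> 2" by (rule occ_not2[OF N0 CSl lenS[OF L] W W' nls(1)])
    then show False using O by simp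
  qed
  have occB: "\<exists>k<length S. N dvd J + int k - ls \<or> N dvd J + int k + 1 - ls"
    if W: "\<forall>t<length S. S ! t = rz D N (J + int t)" and O: "cyc_occ CSl S = 2" and L: "int (length S) < N"
    for S :: "nat list" and J
  proof (rule ccontr)
    assume "\<not> ?thesis"
    then have nb: "bb (J + int k) \<noteq> N - 1 \<and> bb (J + int k) \<noteq> g - 1" if "k < length S" for k
      using that LN1 Lg1 by (auto simp: add.assoc)
    have W': "\<forall>t<length S. S ! t = rz D N (J - ls + int t)"
    proof (intro allI impI)
      fix t assume t: "t < length S"
      have e: "J - ls + int t = (J + int t) - ls" by simp
      have "bb (J - ls + int t) = bb (J + int t) + 1" unfolding e using shm nb[OF t] by simp
      then have "rz D N (J - ls + int t) = rz D N (J + int t)" unfolding letter using nb[OF t] by auto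
      then show "S ! t = rz D N (J - ls + int t)" using W t by simp
    qed
    have "cyc_occ CSl S \<noteq> 2" by (rule occ_not2[OF N0 CSl lenS[OF L] W W' nls(2)])
    then show False using O by simp
  qed
  have S2': "\<forall>t<length S2. S2 ! t = rz D N ((T0 + l1) + int t)" using S2 unfolding l1_def by simp
  have L1: "int (length S1) < N" and L2: "int (length S2) < N" using l1p l2p unfolding l1_def l2_def by auto
  obtain k1 where k1: "k1 < length S1" "N dvd T0 + int k1 \<or> N dvd T0 + int k1 + 1"
    using occA[OF S1 occ1 L1] by blast
  obtain k2 where k2: "k2 < length S2" "N dvd (T0 + l1) + int k2 \<or> N dvd (T0 + l1) + int k2 + 1"
    using occA[OF S2' occ2 L2] by blast
  have hdS2: "rz D N (T0 + l1) = nat (D div N)"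
  proof -
    have "S2 ! 0 = rz D N ((T0 + l1) + int 0)" using S2' len(3) by simp
    then show ?thesis using hd2 len(3) by (simp add: hd_conv_nth)
  qed
  have notl1: "\<not> N dvd T0 + l1"
  proof
    assume "N dvd T0 + l1"
    then have "bb (T0 + l1) = 0" using L0 by simp
    then have "rz D N (T0 + l1) = m + 1" unfolding letter using g1 by simp
    then show False using hdS2 unfolding m_def by simp
  qed
  have k1b: "0 \<le> int k1" "int k1 < l1" using k1(1) unfolding l1_def by auto
  have k2b: "0 \<le> int k2" "int k2 < l2" using k2(1) unfolding l2_def by auto
  have T0: "N dvd T0"
  proof -
    have X: "N dvd T0 + (l1 + int k2) \<or> N dvd T0 + (l1 + int k2 + 1)" using k2(2) by (simp add: add.assoc)
    have Y: "N dvd T0 + int k1 \<or> N dvd T0 + (int k1 + 1)" using k1(2) by (simp add: add.assoc)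
    show ?thesis
    proof (cases "l1 + int k2 + 1 = N")
      case True
      show ?thesis
      proof (cases "N dvd T0 + (l1 + int k2 + 1)")
        case True
        then show ?thesis using \<open>l1 + int k2 + 1 = N\<close> by (metis dvd_add_left_iff dvd_refl)
      next
        case False
        then have x2: "N dvd T0 + (l1 + int k2)" using X by simp
        show ?thesis using Y
        proof
          assume "N dvd T0 + int k1"
          have "int k1 = l1 + int k2" by (rule dvd_uniq[OF \<open>N dvd T0 + int k1\<close> x2]) (use k1b k2b l12 l1p l2p in linarith)+
          then show ?thesis using k1b k2b by simp
        next
          assume "N dvd T0 + (int k1 + 1)"
          have "int k1 + 1 = l1 + int k2" by (rule dvd_uniq[OF \<open>N dvd T0 + (int k1 + 1)\<close> x2]) (use k1b k2b l12 l1p l2p in linarith)+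
          then have "int k2 = 0" "int k1 + 1 = l1" using k1b k2b by auto
          then show ?thesis using x2 notl1 by simp
        qed
      qed
    next
      case False
      then have lt: "l1 + int k2 + 1 < N" using k2b l12 by simp
      show ?thesis using Y
      proof
        assume y: "N dvd T0 + int k1"
        show ?thesis using X
        proof
          assume x2: "N dvd T0 + (l1 + int k2)"
          have "int k1 = l1 + int k2" by (rule dvd_uniq[OF y x2]) (use k1b k2b lt l1p in linarith)+
          then show ?thesis using k1b k2b by simp
        next
          assume x2: "N dvd T0 + (l1 + int k2 + 1)"
          have "int k1 = l1 + int k2 + 1" by (rule dvd_uniq[OF y x2]) (use k1b k2b lt l1p in linarith)+
          then show ?thesis using k1b k2b by simp
        qed
      next
        assume y: "N dvd T0 + (int k1 + 1)"
        show ?thesis using X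
        proof
          assume x2: "N dvd T0 + (l1 + int k2)"
          have "int k1 + 1 = l1 + int k2" by (rule dvd_uniq[OF y x2]) (use k1b k2b lt l1p in linarith)+
          then have "int k2 = 0" using k1b k2b by auto
          then show ?thesis using x2 notl1 by simp
        next
          assume x2: "N dvd T0 + (l1 + int k2 + 1)"
          have "int k1 + 1 = l1 + int k2 + 1" by (rule dvd_uniq[OF y x2]) (use k1b k2b lt l1p in linarith)+
          then show ?thesis using k1b k2b by simp
        qed
      qed
    qed
  qed
  obtain j1 where j1: "j1 < length S1" "N dvd T0 + int j1 - ls \<or> N dvd T0 + int j1 + 1 - ls"
    using occB[OF S1 occ1 L1] by blast
  obtain j2 where j2: "j2 < length S2" "N dvd (T0 + l1) + int j2 - ls \<or> N dvd (T0 + l1) + int j2 + 1 - ls"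
    using occB[OF S2' occ2 L2] by blast
  have red: "N dvd T0 + z \<longleftrightarrow> N dvd z" for z using T0 by (simp add: dvd_add_right_iff)
  have j1b: "0 \<le> int j1" "int j1 < l1" using j1(1) unfolding l1_def by auto
  have j2b: "0 \<le> int j2" "int j2 < l2" using j2(1) unfolding l2_def by auto
  have sm: "z = 0" if "N dvd z" "- N < z" "z < N" for z
  proof -
    have "\<bar>z\<bar> < N" using that(2,3) by (simp add: abs_less_iff)
    with that(1) show ?thesis by (rule dvd_small)
  qed
  have A: "int j1 = ls \<or> int j1 + 1 = ls"
  proof -
    have "N dvd int j1 - ls \<or> N dvd int j1 + 1 - ls" using j1(2) red[of "int j1 - ls"] red[of "int j1 + 1 - ls"]
      by (simp add: algebra_simps)
    then show ?thesis
    proof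
      assume "N dvd int j1 - ls"
      then have "int j1 - ls = 0" by (rule sm) (use j1b l1p ls in linarith)+
      then show ?thesis by simp
    next
      assume "N dvd int j1 + 1 - ls"
      then have "int j1 + 1 - ls = 0" by (rule sm) (use j1b l1p ls in linarith)+
      then show ?thesis by simp
    qed
  qed
  have B: "l1 + int j2 = ls \<or> l1 + int j2 + 1 = ls"
  proof -
    have "N dvd l1 + int j2 - ls \<or> N dvd l1 + int j2 + 1 - ls" using j2(2) red[of "l1 + int j2 - ls"] red[of "l1 + int j2 + 1 - ls"]
      by (simp add: algebra_simps)
    then show ?thesis
    proof
      assume "N dvd l1 + int j2 - ls"
      then have "l1 + int j2 - ls = 0" by (rule sm) (use j2b l1p l12 ls in linarith)+
      then show ?thesis by simp
    next
      assume "N dvd l1 + int j2 + 1 - ls"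
      then have "l1 + int j2 + 1 - ls = 0" by (rule sm) (use j2b l1p l12 ls in linarith)+
      then show ?thesis by simp
    qed
  qed
  have "l1 = ls" using A B j1b j2b by auto
  then show ?thesis using T0 unfolding l1_def by simp
qed


fun Mq :: "nat list \<Rightarrow> nat \<times> nat \<times> nat \<times> nat" where
  "Mq [] = (0, 1, 1, 0)"
| "Mq (x # xs) = (case Mq xs of (A, B, C, E) \<Rightarrow> (C, E, x*C + A, x*E + B))"

lemma Mq_cf:
  "(\<forall>x\<in>set xs. x > 0) \<Longrightarrow> Mq xs = (A, B, C, E) \<Longrightarrow> 1 \<le> C \<and> cf xs = of_nat A / of_nat C"
proof (induction xs arbitrary: A B C E)
  case Nil then show ?case by auto
next
  case (Cons x xs)
  obtain A0 B0 C0 E0 where M: "Mq xs = (A0, B0, C0, E0)" by (cases "Mq xs") auto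
  have IH: "1 \<le> C0" "cf xs = of_nat A0 / of_nat C0" using Cons M by auto
  have eq: "A = C0" "C = x*C0 + A0" using Cons.prems(2) M by auto
  have x: "1 \<le> x" using Cons.prems(1) by auto
  have "1 \<le> x * C0" using x IH(1) by simp
  then have C1: "1 \<le> C" unfolding eq(2) by (rule trans_le_add1)
  have "cf (x # xs) = 1 / (of_nat x + of_nat A0 / of_nat C0)" using IH by simp
  also have "\<dots> = of_nat C0 / (of_nat x * of_nat C0 + of_nat A0)" using IH(1)
    by (simp add: field_simps)
  also have "\<dots> = of_nat A / of_nat C" using eq by simp
  finally show ?case using C1 by simp
qed

lemma Mq_app:
  "(\<forall>x\<in>set xs. x > 0) \<Longrightarrow> 0 < c \<Longrightarrow> Mq xs = (A, B, C, E) \<Longrightarrow>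
   cf (xs @ [c]) = of_nat (c*A + B) / of_nat (c*C + E)"
proof (induction xs arbitrary: A B C E)
  case Nil then show ?case by auto
next
  case (Cons x xs)
  obtain A0 B0 C0 E0 where M: "Mq xs = (A0, B0, C0, E0)" by (cases "Mq xs") auto
  have IH: "cf (xs @ [c]) = of_nat (c*A0 + B0) / of_nat (c*C0 + E0)" using Cons M by auto
  have C0: "1 \<le> C0" using Mq_cf[of xs] Cons.prems M by auto
  have "1 \<le> c * C0" using C0 Cons.prems(2) by simp
  then have "0 < c*C0 + E0" by simp
  then have pos: "(0::rat) < of_nat (c*C0 + E0)" by (simp only: of_nat_0_less_iff)
  have eq: "A = C0" "B = E0" "C = x*C0 + A0" "E = x*E0 + B0" using Cons.prems(3) M by auto
  have "cf ((x # xs) @ [c]) = 1 / (of_nat x + of_nat (c*A0 + B0) / of_nat (c*C0 + E0))" using IH by simp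
  also have "\<dots> = of_nat (c*C0 + E0) / (of_nat x * of_nat (c*C0 + E0) + of_nat (c*A0 + B0))"
    using pos by (simp add: field_simps)
  also have "\<dots> = of_nat (c*A + B) / of_nat (c*C + E)" using eq by (simp add: algebra_simps)
  finally show ?case .
qed

lemma Mq_butlast:
  "(\<forall>x\<in>set xs. x > 0) \<Longrightarrow> xs \<noteq> [] \<Longrightarrow> Mq xs = (A, B, C, E) \<Longrightarrow>
   1 \<le> E \<and> cf (butlast xs) = of_nat B / of_nat E"
proof (induction xs arbitrary: A B C E)
  case Nil then show ?case by auto
next
  case (Cons x xs)
  obtain A0 B0 C0 E0 where M: "Mq xs = (A0, B0, C0, E0)" by (cases "Mq xs") auto
  have eq: "B = E0" "E = x*E0 + B0" using Cons.prems(3) M by auto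
  show ?case
  proof (cases "xs = []")
    case True then show ?thesis using Cons.prems by auto
  next
    case False
    have IH: "1 \<le> E0" "cf (butlast xs) = of_nat B0 / of_nat E0" using Cons False M by auto
    have x: "1 \<le> x" using Cons.prems(1) by auto
    have "1 \<le> x * E0" using x IH(1) by simp
    then have E1: "1 \<le> E" unfolding eq(2) by (rule trans_le_add1)
    have "cf (butlast (x # xs)) = 1 / (of_nat x + of_nat B0 / of_nat E0)" using IH False by simp
    also have "\<dots> = of_nat E0 / (of_nat x * of_nat E0 + of_nat B0)" using IH(1)
      by (simp add: field_simps)
    also have "\<dots> = of_nat B / of_nat E" using eq by simp
    finally show ?thesis using E1 by simp
  qed
qed

lemma Mq_det:
  "Mq xs = (A, B, C, E) \<Longrightarrow> int A * int E - int B * int C = (if even (length xs) then -1 else 1)"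
proof (induction xs arbitrary: A B C E)
  case Nil then show ?case by auto
next
  case (Cons x xs)
  obtain A0 B0 C0 E0 where M: "Mq xs = (A0, B0, C0, E0)" by (cases "Mq xs") auto
  have eq: "A = C0" "B = E0" "C = x*C0 + A0" "E = x*E0 + B0" using Cons.prems M by auto
  have IH: "int A0 * int E0 - int B0 * int C0 = (if even (length xs) then -1 else 1)" using Cons M by auto
  have "int A * int E - int B * int C = - (int A0 * int E0 - int B0 * int C0)"
    unfolding eq by (simp add: algebra_simps)
  then show ?case using IH by simp
qed

lemma Mq_bounds:
  "(\<forall>x\<in>set xs. x > 0) \<Longrightarrow> xs \<noteq> [] \<Longrightarrow> last xs \<ge> 2 \<Longrightarrow> Mq xs = (A, B, C, E) \<Longrightarrow>
   B < A \<and> E < C \<and> A < C \<and> 1 \<le> A"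
proof (induction xs arbitrary: A B C E)
  case Nil then show ?case by auto
next
  case (Cons x xs)
  obtain A0 B0 C0 E0 where M: "Mq xs = (A0, B0, C0, E0)" by (cases "Mq xs") auto
  have eq: "A = C0" "B = E0" "C = x*C0 + A0" "E = x*E0 + B0" using Cons.prems(4) M by auto
  show ?case
  proof (cases "xs = []")
    case True then show ?thesis using Cons.prems M by auto
  next
    case False
    have IH: "B0 < A0" "E0 < C0" "A0 < C0" "1 \<le> A0" using Cons False M by auto
    have x: "1 \<le> x" using Cons.prems(1) by auto
    have "1 * C0 \<le> x * C0" by (rule mult_le_mono1[OF x])
    then have h1: "C0 \<le> x * C0" by simp
    have h2: "x * E0 \<le> x * C0" by (rule mult_le_mono2[OF less_imp_le[OF IH(2)]])
    have EC: "E < C" unfolding eq by (rule add_le_less_mono[OF h2 IH(1)])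
    have "C0 < C0 + A0" using IH(4) by simp
    also have "C0 + A0 \<le> x*C0 + A0" using h1 by simp
    finally have AC: "A < C" unfolding eq .
    show ?thesis using EC AC eq IH by auto
  qed
qed

lemma Mq_B_pos:
  "(\<forall>x\<in>set xs. x > 0) \<Longrightarrow> length xs \<ge> 2 \<Longrightarrow> Mq xs = (A, B, C, E) \<Longrightarrow> 1 \<le> B"
proof -
  assume a: "\<forall>x\<in>set xs. x > 0" "length xs \<ge> 2" "Mq xs = (A, B, C, E)"
  obtain x ys where xs: "xs = x # ys" and ys: "ys \<noteq> []" using a(2) by (cases xs; cases "tl xs") auto
  obtain A0 B0 C0 E0 where M: "Mq ys = (A0, B0, C0, E0)" by (cases "Mq ys") auto
  have "B = E0" using a(3) M xs by auto
  moreover have "1 \<le> E0" using Mq_butlast[of ys] a(1) xs ys M by auto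
  ultimately show ?thesis by simp
qed

lemma Mq_hd:
  "(\<forall>x\<in>set xs. x > 0) \<Longrightarrow> length xs \<ge> 2 \<Longrightarrow> last xs \<ge> 2 \<Longrightarrow> Mq xs = (A, B, C, E) \<Longrightarrow>
   hd xs = C div A"
proof -
  assume a: "\<forall>x\<in>set xs. x > 0" "length xs \<ge> 2" "last xs \<ge> 2" "Mq xs = (A, B, C, E)"
  obtain x ys where xs: "xs = x # ys" and ys: "ys \<noteq> []" using a(2) by (cases xs; cases "tl xs") auto
  obtain A0 B0 C0 E0 where M: "Mq ys = (A0, B0, C0, E0)" by (cases "Mq ys") auto
  have eq: "A = C0" "C = x*C0 + A0" using a(4) M xs by auto
  have "A0 < C0" using Mq_bounds[of ys] a xs ys M by auto
  then have "(x*C0 + A0) div C0 = x" by simp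
  then show ?thesis using eq xs by simp
qed


lemma core_c:
  fixes N N' d t b c :: int
  assumes N: "0 < N" and N': "0 \<le> N'" and b: "0 \<le> b" "b < N" and tc: "t + b*N' = c*N"
    and tL: "t < (d+1)*N + N'"
  shows "c - N' \<le> d"
proof -
  have "N' * (1 + b) \<le> N' * N" using N' b by (intro mult_left_mono) auto
  then have "c*N < (d+1)*N + N' * N" using tc tL by (simp add: algebra_simps)
  then have "N * c < N * (d + 1 + N')" by (simp add: algebra_simps)
  then have "c < d + 1 + N'" using N by simp
  then show ?thesis by simp
qed

lemma core_ident:
  fixes N N' u v t b c Q :: int
  assumes "Q = u*N + v*N'" "t + b*N' = c*N"
  shows "t*v + b*Q - N*Q = N * (c*v - N'*v - (N - b)*u)"
proof -
  show ?thesis using assms by algebra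
qed

lemma core_ge:
  fixes N N' u v t b c Q :: int
  assumes N: "0 < N" and N': "0 \<le> N'" and u: "0 \<le> u" and v: "1 \<le> v" and Q: "Q = u*N + v*N'"
    and t: "1 \<le> t" and b: "0 \<le> b" and tc: "t + b*N' = c*N"
  shows "N * v \<le> t*v + b*Q"
proof -
  have "0 < c * N" using tc t b N' by (smt (verit) mult_nonneg_nonneg)
  then have c1: "1 \<le> c" using N by (simp add: zero_less_mult_iff)
  have "N \<le> c * N" using c1 N by simp
  then have tN: "N \<le> t + b*N'" using tc by simp
  have "0 \<le> b * u * N" using b u N by simp
  then have "b * v * N' \<le> b * Q" using Q by (simp add: algebra_simps)
  moreover have "N * v \<le> (t + b*N') * v" using tN v by (intro mult_right_mono) auto
  ultimately show ?thesis by (simp add: algebra_simps)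
qed

lemma core_even:
  fixes N N' u v e d t b c Q :: int
  assumes N: "0 < N" and N': "1 \<le> N'" and u: "0 \<le> u" and v: "1 \<le> v" and Q: "Q = u*N + v*N'"
    and e: "1 \<le> e" "e \<le> v" and dv: "d*v < u + e" "u + e \<le> (d+1)*v"
    and t: "1 \<le> t" and b: "0 \<le> b" "b < N" and tc: "t + b*N' = c*N"
  shows "t < (d+1)*N + N' \<Longrightarrow> t*v + b*Q - N*Q < N*e \<and> N*e \<le> t*v + b*Q"
    and "t = (d+1)*N + N' \<Longrightarrow> b = N - 1 \<Longrightarrow> t*v + b*Q - 2*N*Q < N*e \<and> N*e \<le> t*v + b*Q - N*Q"
proof -
  have ge: "N * v \<le> t*v + b*Q" by (rule core_ge[OF N _ u v Q t b(1) tc]) (use N' in simp)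
  have Ne: "N * e \<le> N * v" using e N by simp
  have vQ: "v \<le> Q"
  proof -
    have "v * 1 \<le> v * N'" using v N' by (intro mult_left_mono) auto
    moreover have "0 \<le> u * N" using u N by simp
    ultimately show ?thesis using Q by simp
  qed
  {
    assume tL: "t < (d+1)*N + N'"
    have cd: "c - N' \<le> d" by (rule core_c[OF N _ b tc tL]) (use N' in simp)
    have "(c - N') * v \<le> d * v" using cd v by (intro mult_right_mono) auto
    moreover have "u * 1 \<le> u * (N - b)" using u b by (intro mult_left_mono) auto
    ultimately have "c*v - N'*v - (N - b)*u < e" using dv(1) by (simp add: algebra_simps)
    then have "N * (c*v - N'*v - (N - b)*u) < N * e" using N by simp
    then show "t*v + b*Q - N*Q < N*e \<and> N*e \<le> t*v + b*Q"
      using core_ident[OF Q tc] ge Ne by simp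
  }
  {
    assume tL: "t = (d+1)*N + N'" and bN: "b = N - 1"
    have id: "t*v + b*Q - N*Q = N * ((d+1)*v - u)" using tL bN Q by algebra
    have "e \<le> (d+1)*v - u" using dv by simp
    then have a: "N * e \<le> N * ((d+1)*v - u)" using N by simp
    have "(d+1)*v - u - Q < e" using dv vQ by (simp add: algebra_simps)
    then have "N * ((d+1)*v - u - Q) < N * e" using N by simp
    then have b': "N * ((d+1)*v - u) - N * Q < N * e" by (simp add: algebra_simps)
    show "t*v + b*Q - 2*N*Q < N*e \<and> N*e \<le> t*v + b*Q - N*Q"
      using id a b' by (simp add: algebra_simps)
  }
qed

lemma core_odd:
  fixes N N' u v e d t b c Q :: int
  assumes N: "0 < N" and N': "1 \<le> N'" and u: "0 \<le> u" and v: "1 \<le> v" and Q: "Q = u*N + v*N'"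
    and e: "0 \<le> e" "e < v" and dv: "d*v \<le> u + e" "u + e < (d+1)*v"
    and t: "1 \<le> t" and b: "0 \<le> b" "b < N" and tc: "t + b*N' = c*N"
  shows "t < (d+1)*N + N' \<Longrightarrow> N*e < t*v + b*Q \<and> t*v + b*Q - N*e \<le> N*Q"
    and "t = (d+1)*N + N' \<Longrightarrow> b = N - 1 \<Longrightarrow> N*e + N*Q < t*v + b*Q \<and> t*v + b*Q \<le> 2*N*Q + N*e"
proof -
  have ge: "N * v \<le> t*v + b*Q" by (rule core_ge[OF N _ u v Q t b(1) tc]) (use N' in simp)
  have Ne: "N * e < N * v" using e N by simp
  have vQ: "v \<le> Q"
  proof -
    have "v * 1 \<le> v * N'" using v N' by (intro mult_left_mono) auto
    moreover have "0 \<le> u * N" using u N by simp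
    ultimately show ?thesis using Q by simp
  qed
  {
    assume tL: "t < (d+1)*N + N'"
    have cd: "c - N' \<le> d" by (rule core_c[OF N _ b tc tL]) (use N' in simp)
    have "(c - N') * v \<le> d * v" using cd v by (intro mult_right_mono) auto
    moreover have "u * 1 \<le> u * (N - b)" using u b by (intro mult_left_mono) auto
    ultimately have "c*v - N'*v - (N - b)*u \<le> e" using dv(1) by (simp add: algebra_simps)
    then have "N * (c*v - N'*v - (N - b)*u) \<le> N * e" using N by simp
    then show "N*e < t*v + b*Q \<and> t*v + b*Q - N*e \<le> N*Q"
      using core_ident[OF Q tc] ge Ne by simp
  }
  {
    assume tL: "t = (d+1)*N + N'" and bN: "b = N - 1"
    have id: "t*v + b*Q - N*Q = N * ((d+1)*v - u)" using tL bN Q by algebra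
    have "e < (d+1)*v - u" using dv by simp
    then have a: "N * e < N * ((d+1)*v - u)" using N by simp
    have "(d+1)*v - u - e \<le> Q" using dv vQ by (simp add: algebra_simps)
    then have "N * ((d+1)*v - u - e) \<le> N * Q" using N by simp
    then have b': "N * ((d+1)*v - u) \<le> N * Q + N * e" by (simp add: algebra_simps)
    show "N*e + N*Q < t*v + b*Q \<and> t*v + b*Q \<le> 2*N*Q + N*e"
      using id a b' by (simp add: algebra_simps)
  }
qed


lemma scale_lt: "0 < (N::int) \<Longrightarrow> N*X = U \<Longrightarrow> N*Y = V \<Longrightarrow> U < V \<Longrightarrow> X < Y"
  by (metis mult_less_cancel_left_pos)
lemma scale_le: "0 < (N::int) \<Longrightarrow> N*X = U \<Longrightarrow> N*Y = V \<Longrightarrow> U \<le> V \<Longrightarrow> X \<le> Y"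
  by (metis mult_le_cancel_left_pos)

lemma cz_bounds: "0 < N \<Longrightarrow> (cz X N - 1) * N < X \<and> X \<le> cz X N * N"
  using cz_le_iff[of N X "cz X N"] cz_gt_iff[of N "cz X N - 1" X] by auto

lemma inv_exists: assumes "coprime P (Q::int)" shows "\<exists>x y. x * P + y * Q = 1"
proof -
  obtain x y where "x * P + y * Q = gcd P Q" using bezout_int by blast
  then show ?thesis using assms by (auto simp: coprime_iff_gcd_eq_1)
qed

lemma dvd_N1: assumes "coprime N (N'::int)" "N dvd N' * (1 + b)" "0 \<le> b" "b < N" shows "b = N - 1"
proof -
  have "N dvd (1 + b)" using assms(1,2) by (simp add: coprime_dvd_mult_right_iff)
  then have "N \<le> 1 + b" using assms(3) by (intro zdvd_imp_le) auto
  then show ?thesis using assms(4) by simp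
qed


lemma pattern_even:
  fixes N N' D D' u v e d Q P L :: int
  assumes N2: "2 \<le> N" and N': "1 \<le> N'" and det: "D*N' - N*D' = 1"
    and u: "1 \<le> u" and v: "1 \<le> v" and Q: "Q = u*N + v*N'" and P: "P = u*D + v*D'"
    and e: "1 \<le> e" "e \<le> v" and dv: "d*v < u + e" "u + e \<le> (d+1)*v"
    and cop: "coprime P Q" and L: "L = (d+1)*N + N'"
  shows "\<exists>J0. \<forall>t. 0 \<le> t \<and> t \<le> L \<longrightarrow>
     cz ((J0+t)*P) Q - cz (J0*P) Q = cz (t*D) N - (if 1 \<le> t then 1 else 0) - (if t = L then 1 else 0)"
proof -
  have N0: "0 < N" using N2 by simp
  have vQ: "v \<le> Q"
  proof -
    have "v * 1 \<le> v * N'" using v N' by (intro mult_left_mono) auto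
    moreover have "0 \<le> u * N" using u N0 by simp
    ultimately show ?thesis using Q by simp
  qed
  have Q0: "0 < Q" using vQ v by simp
  have NP: "N * P = D * Q - v" using det Q P by algebra
  have copN: "coprime N N'"
  proof -
    have "N' * D + N * (- D') = 1" using det by (simp add: algebra_simps)
    show ?thesis
    proof (rule coprimeI)
      fix k assume "k dvd N" "k dvd N'"
      then have "k dvd N' * D + N * (- D')" by simp
      then show "is_unit k" using \<open>N' * D + N * (- D') = 1\<close> by simp
    qed
  qed
  obtain x y where xy: "x * P + y * Q = 1" using inv_exists[OF cop] by blast
  define J0 where "J0 = e * x"
  have J0P: "J0 * P = e + (- e * y) * Q" unfolding J0_def using xy by algebra
  have cze: "cz e Q = 1" by (rule cz_eqI[OF Q0]) (use e vQ in auto)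
  have main: "cz (t*P + e) Q = cz (t*D) N - (if t = L then 1 else 0)" if t: "1 \<le> t" "t \<le> L" for t
  proof -
    define a where "a = cz (t*D) N"
    define b where "b = a*N - t*D"
    have ab: "(a - 1) * N < t*D" "t*D \<le> a * N" using cz_bounds[OF N0, of "t*D"] unfolding a_def by auto
    have b0: "0 \<le> b" "b < N" unfolding b_def using ab by (auto simp: algebra_simps)
    define c where "c = a*N' - t*D'"
    have tc: "t + b*N' = c*N" unfolding b_def c_def using det by algebra
    have cc: "t < (d+1)*N + N' \<Longrightarrow> t*v + b*Q - N*Q < N*e \<and> N*e \<le> t*v + b*Q"
         "t = (d+1)*N + N' \<Longrightarrow> b = N - 1 \<Longrightarrow> t*v + b*Q - 2*N*Q < N*e \<and> N*e \<le> t*v + b*Q - N*Q"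
      using core_even[OF N0 N' _ v Q e dv t(1) b0 tc] u by auto
    have idL: "N * (t*P + e) = t*D*Q - t*v + N*e" using NP by algebra
    show ?thesis
    proof (cases "t = L")
      case False
      then have tl: "t < (d+1)*N + N'" using t L by simp
      have "cz (t*P + e) Q = a"
      proof (rule cz_eqI[OF Q0])
        have id1: "N * ((a - 1) * Q) = t*D*Q + b*Q - N*Q" unfolding b_def by algebra
        show "(a - 1) * Q < t * P + e" by (rule scale_lt[OF N0 id1 idL]) (use cc(1)[OF tl] in simp)
        have id2: "N * (a * Q) = t*D*Q + b*Q" unfolding b_def by algebra
        show "t * P + e \<le> a * Q" by (rule scale_le[OF N0 idL id2]) (use cc(1)[OF tl] in simp)
      qed
      then show ?thesis using False unfolding a_def by simp
    next
      case True
      have "N dvd N' * (1 + b)"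
      proof -
        have "N' * (1 + b) = c*N - (d+1)*N" using tc True L by algebra
        then show ?thesis by simp
      qed
      then have bN: "b = N - 1" using dvd_N1[OF copN] b0 by simp
      have tl: "t = (d+1)*N + N'" using True L by simp
      have "cz (t*P + e) Q = a - 1"
      proof (rule cz_eqI[OF Q0])
        have id1: "N * ((a - 1 - 1) * Q) = t*D*Q + b*Q - 2*N*Q" unfolding b_def by algebra
        show "(a - 1 - 1) * Q < t * P + e" by (rule scale_lt[OF N0 id1 idL]) (use cc(2)[OF tl bN] in simp)
        have id2: "N * ((a - 1) * Q) = t*D*Q + b*Q - N*Q" unfolding b_def by algebra
        show "t * P + e \<le> (a - 1) * Q" by (rule scale_le[OF N0 idL id2]) (use cc(2)[OF tl bN] in simp)
      qed
      then show ?thesis using True unfolding a_def by simp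
    qed
  qed
  have "0 < (d+1)*v" using dv u e by simp
  then have "0 < d + 1" using v by (simp add: zero_less_mult_iff)
  then have "0 < (d+1)*N" using N0 by simp
  then have L0: "0 < L" using L N' by simp
  show ?thesis
  proof (intro exI allI impI)
    fix t assume t: "0 \<le> t \<and> t \<le> L"
    have e1: "(J0 + t) * P = (t*P + e) + (- e * y) * Q" using J0P by (simp add: algebra_simps)
    have e2: "cz ((J0 + t) * P) Q - cz (J0 * P) Q = cz (t*P + e) Q - 1"
      unfolding e1 J0P cz_add[OF Q0] cze by simp
    show "cz ((J0 + t) * P) Q - cz (J0 * P) Q = cz (t * D) N - (if 1 \<le> t then 1 else 0) - (if t = L then 1 else 0)"
    proof (cases "t = 0")
      case True
      then show ?thesis unfolding e2 using cze L0 by (simp add: cz_def)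
    next
      case False
      then show ?thesis unfolding e2 using main[of t] t by simp
    qed
  qed
qed


lemma pattern_odd:
  fixes N N' D D' u v e d Q P L :: int
  assumes N2: "2 \<le> N" and N': "1 \<le> N'" and det: "D*N' - N*D' = -1"
    and u: "1 \<le> u" and v: "1 \<le> v" and Q: "Q = u*N + v*N'" and P: "P = u*D + v*D'"
    and e: "0 \<le> e" "e < v" and dv: "d*v \<le> u + e" "u + e < (d+1)*v"
    and cop: "coprime P Q" and L: "L = (d+1)*N + N'"
  shows "\<exists>J0. \<forall>t. 0 \<le> t \<and> t \<le> L \<longrightarrow>
     cz ((J0+t)*P) Q - cz (J0*P) Q = cz (((N - N') + t)*D) N - cz ((N - N')*D) N
        + (if 1 \<le> t then 1 else 0) + (if t = L then 1 else 0)"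
proof -
  have N0: "0 < N" using N2 by simp
  have vQ: "v \<le> Q"
  proof -
    have "v * 1 \<le> v * N'" using v N' by (intro mult_left_mono) auto
    moreover have "0 \<le> u * N" using u N0 by simp
    ultimately show ?thesis using Q by simp
  qed
  have Q0: "0 < Q" using vQ v by simp
  have NP: "N * P = D * Q + v" using det Q P by algebra
  have copN: "coprime N N'"
  proof -
    have idt: "N' * (- D) + N * D' = 1" using det by (simp add: algebra_simps)
    show ?thesis
    proof (rule coprimeI)
      fix k assume "k dvd N" "k dvd N'"
      then have "k dvd N' * (- D) + N * D'" by simp
      then show "is_unit k" using idt by simp
    qed
  qed
  obtain x y where xy: "x * P + y * Q = 1" using inv_exists[OF cop] by blast
  define J0 where "J0 = - e * x"
  have J0P: "J0 * P = - e + (e * y) * Q" unfolding J0_def using xy by algebra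
  have cze: "cz (- e) Q = 0" by (rule cz_eqI[OF Q0]) (use e vQ in auto)
  have lsD: "(N - N') * D = 1 + (D - D') * N" using det by algebra
  have cz1: "cz 1 N = 1" by (rule cz_eqI[OF N0]) (use N2 in auto)
  have rhs: "cz (((N - N') + t)*D) N - cz ((N - N')*D) N = cz (t*D + 1) N - 1" for t
  proof -
    have "((N - N') + t)*D = (t*D + 1) + (D - D') * N" using lsD by algebra
    then show ?thesis unfolding lsD by (simp add: cz_add[OF N0] cz1 add.commute)
  qed
  have main: "cz (t*P - e) Q = cz (t*D + 1) N + (if t = L then 1 else 0)" if t: "1 \<le> t" "t \<le> L" for t
  proof -
    define a where "a = cz (t*D + 1) N"
    define b where "b = t*D - (a - 1)*N"
    have ab: "(a - 1) * N < t*D + 1" "t*D + 1 \<le> a * N" using cz_bounds[OF N0, of "t*D + 1"] unfolding a_def by auto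
    have b0: "0 \<le> b" "b < N" unfolding b_def using ab by (auto simp: algebra_simps)
    define c where "c = t*D' - (a - 1)*N'"
    have tc: "t + b*N' = c*N" unfolding b_def c_def using det by algebra
    have cc: "t < (d+1)*N + N' \<Longrightarrow> N*e < t*v + b*Q \<and> t*v + b*Q - N*e \<le> N*Q"
         "t = (d+1)*N + N' \<Longrightarrow> b = N - 1 \<Longrightarrow> N*e + N*Q < t*v + b*Q \<and> t*v + b*Q \<le> 2*N*Q + N*e"
      using core_odd[OF N0 N' _ v Q e dv t(1) b0 tc] u by auto
    have idL: "N * (t*P - e) = t*D*Q + t*v - N*e" using NP by algebra
    show ?thesis
    proof (cases "t = L")
      case False
      then have tl: "t < (d+1)*N + N'" using t L by simp
      have "cz (t*P - e) Q = a"
      proof (rule cz_eqI[OF Q0])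
        have id1: "N * ((a - 1) * Q) = t*D*Q - b*Q" unfolding b_def by algebra
        show "(a - 1) * Q < t * P - e" by (rule scale_lt[OF N0 id1 idL]) (use cc(1)[OF tl] in simp)
        have id2: "N * (a * Q) = t*D*Q - b*Q + N*Q" unfolding b_def by algebra
        show "t * P - e \<le> a * Q" by (rule scale_le[OF N0 idL id2]) (use cc(1)[OF tl] in simp)
      qed
      then show ?thesis using False unfolding a_def by simp
    next
      case True
      have "N dvd N' * (1 + b)"
      proof -
        have "N' * (1 + b) = c*N - (d+1)*N" using tc True L by algebra
        then show ?thesis by simp
      qed
      then have bN: "b = N - 1" using dvd_N1[OF copN] b0 by simp
      have tl: "t = (d+1)*N + N'" using True L by simp
      have "cz (t*P - e) Q = a + 1"
      proof (rule cz_eqI[OF Q0])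
        have id1: "N * ((a + 1 - 1) * Q) = t*D*Q - b*Q + N*Q" unfolding b_def by algebra
        show "(a + 1 - 1) * Q < t * P - e" by (rule scale_lt[OF N0 id1 idL]) (use cc(2)[OF tl bN] in simp)
        have id2: "N * ((a + 1) * Q) = t*D*Q - b*Q + 2*N*Q" unfolding b_def by algebra
        show "t * P - e \<le> (a + 1) * Q" by (rule scale_le[OF N0 idL id2]) (use cc(2)[OF tl bN] in simp)
      qed
      then show ?thesis using True unfolding a_def by simp
    qed
  qed
  show ?thesis
  proof (intro exI allI impI)
    fix t assume t: "0 \<le> t \<and> t \<le> L"
    have e1: "(J0 + t) * P = (t*P - e) + (e * y) * Q" using J0P by (simp add: algebra_simps)
    have e2: "cz ((J0 + t) * P) Q - cz (J0 * P) Q = cz (t*P - e) Q"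
      unfolding e1 J0P cz_add[OF Q0] cze by simp
    show "cz ((J0 + t) * P) Q - cz (J0 * P) Q = cz (((N - N') + t)*D) N - cz ((N - N')*D) N
        + (if 1 \<le> t then 1 else 0) + (if t = L then 1 else 0)"
    proof (cases "t = 0")
      case True
      have "L \<noteq> 0"
      proof -
        have "0 < (d+1)*v" using dv u e by simp
        then have "0 < d + 1" using v by (simp add: zero_less_mult_iff)
        then have "0 < (d+1)*N" using N0 by simp
        then show ?thesis using L N' by simp
      qed
      then show ?thesis unfolding e2 rhs using cze cz1 True by simp
    next
      case False
      then show ?thesis unfolding e2 rhs using main[of t] t by simp
    qed
  qed
qed


lemma quot_eq: "0 < b \<Longrightarrow> coprime a b \<Longrightarrow> quotient_of (of_int a / of_int b) = (a, b)"
  by (metis Fract_of_int_quotient quotient_of_Fract normalize_stable)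

lemma rot_nth:
  assumes q: "0 < q" and CSl: "CSl = map (\<lambda>k. rz p q (K + int k)) [0..<2 * nat q]" and i: "i < 2 * nat q"
  shows "rotate j CSl ! i = rz p q (K + int j + int i)"
proof -
  have len: "length CSl = 2 * nat q" using CSl by simp
  have m: "(i + j) mod (2 * nat q) < 2 * nat q" using q by simp
  have "rotate j CSl ! i = CSl ! ((i + j) mod (2 * nat q))" using i len by (simp add: nth_rotate add.commute)
  also have "\<dots> = rz p q (K + int ((i + j) mod (2 * nat q)))" using CSl m by (simp del: upt_Suc)
  also have "\<dots> = rz p q (K + int j + int i)"
  proof (rule rz_mod[OF q, of q])
    show "q dvd q" by simp
    have "int ((i + j) mod (2 * nat q)) = (int i + int j) mod (2 * q)" using q by (simp add: zmod_int)
    moreover have "(K + X mod (2*q)) mod q = (K + X) mod q" for X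
    proof -
      have "(K + X mod (2*q)) mod q = (K + (X mod (2*q)) mod q) mod q" by (simp add: mod_add_right_eq)
      also have "(X mod (2*q)) mod q = X mod q" by (rule mod_mod_cancel) simp
      also have "(K + X mod q) mod q = (K + X) mod q" by (simp add: mod_add_right_eq)
      finally show ?thesis .
    qed
    ultimately show "(K + int ((i + j) mod (2 * nat q))) mod q = (K + int j + int i) mod q"
      by (simp add: algebra_simps)
  qed
  finally show ?thesis .
qed

lemma W_nth:
  assumes "length W = n" "l \<le> n" "\<forall>i<n. W ! i = f i" "\<forall>i. f (i + n) = f i"
  shows "t < k*n + l \<Longrightarrow> (concat (replicate k W) @ take l W) ! t = f t"
proof (induction k arbitrary: t)
  case 0
  then show ?case using assms by simp
next
  case (Suc k)
  show ?case
  proof (cases "t < n")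
    case True
    then show ?thesis using assms by (simp add: nth_append)
  next
    case False
    have "(concat (replicate (Suc k) W) @ take l W) ! t = (concat (replicate k W) @ take l W) ! (t - n)"
      using False assms(1) by (simp add: nth_append)
    also have "\<dots> = f (t - n)" using Suc False by simp
    also have "\<dots> = f t"
    proof -
      have "f (t - n + n) = f (t - n)" using assms(4) by blast
      then show ?thesis using False by simp
    qed
    finally show ?thesis .
  qed
qed

lemma len_cr: "length (concat (replicate k W)) = k * length W"
  by (induction k) auto

lemma rep_shift: "A @ concat (replicate d (B @ A)) = concat (replicate d (A @ B)) @ A"
  by (induction d) auto

lemma pat_nth:
  assumes "pat = [y] @ mid @ [y]" "Wl = [x] @ mid @ [x]" "t < length Wl"
  shows "length pat = length Wl" "pat ! t = (if t = 0 \<or> t = length Wl - 1 then y else Wl ! t)"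
proof -
  show "length pat = length Wl" using assms by simp
  show "pat ! t = (if t = 0 \<or> t = length Wl - 1 then y else Wl ! t)"
    using assms by (auto simp: nth_append nth_Cons')
qed


lemma cf_le1: "(\<forall>x\<in>set xs. x > 0) \<Longrightarrow> 0 \<le> cf xs \<and> cf xs \<le> 1"
proof (induction xs)
  case Nil then show ?case by simp
next
  case (Cons x xs)
  then have x: "1 \<le> x" and c: "0 \<le> cf xs" by auto
  have "1 \<le> of_nat x + cf xs" using x c by simp
  then show ?case by (simp add: divide_le_eq)
qed

lemma frac_lt: "0 < b \<Longrightarrow> 0 < d \<Longrightarrow> (of_int a / of_int b < (of_int c / of_int d :: rat)) \<longleftrightarrow> a*d < c*b"
proof -
  assume b: "0 < b" and d: "0 < d"
  have "(of_int a / of_int b < (of_int c / of_int d :: rat)) \<longleftrightarrow> of_int a * of_int d < (of_int c * of_int b :: rat)"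
    using b d by (simp add: field_simps)
  also have "\<dots> \<longleftrightarrow> a*d < c*b" by (simp flip: of_int_mult)
  finally show ?thesis .
qed

lemma finish_gen:
  fixes Qs Ps K' Jst sg :: int and Ln x y :: nat and G :: "int \<Rightarrow> int"
  assumes Q0: "0 < Qs" and CSs: "CSl = map (\<lambda>k. rz Ps Qs (K' + int k)) [0..<2 * nat Qs]"
    and Fid: "\<forall>t. 0 \<le> t \<and> t \<le> int Ln \<longrightarrow> cz ((Jst+t)*Ps) Qs - cz (Jst*Ps) Qs
                 = G t + sg * ((if 1 \<le> t then 1 else 0) + (if t = int Ln then 1 else 0))"
    and G: "\<forall>t<Ln. G (int t + 1) - G (int t) = int (Wl ! t)"
    and lenW: "length Wl = Ln" "2 \<le> Ln" "Ln \<le> 2 * nat Qs"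
    and pat: "pat = [y] @ mid @ [y]" "Wl = [x] @ mid @ [x]" and xy: "int y = int x + sg"
  shows "cyc_contains CSl pat"
proof (rule contains_at[OF Q0 CSs])
  have lp: "length pat = Ln" using pat lenW by simp
  show "length pat \<le> 2 * nat Qs" using lp lenW by simp
  show "\<forall>t<length pat. pat ! t = rz Ps Qs (Jst + int t)"
  proof (intro allI impI)
    fix t assume t: "t < length pat"
    then have tL: "t < Ln" using lp by simp
    have f1: "cz ((Jst + (int t + 1))*Ps) Qs - cz (Jst*Ps) Qs
        = G (int t + 1) + sg * (1 + (if int t + 1 = int Ln then 1 else 0))"
      using Fid[rule_format, of "int t + 1"] tL by simp
    have f0: "cz ((Jst + int t)*Ps) Qs - cz (Jst*Ps) Qs
        = G (int t) + sg * ((if 1 \<le> int t then 1 else 0))"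
      using Fid[rule_format, of "int t"] tL by simp
    have "rz Ps Qs (Jst + int t) = nat (cz ((Jst + (int t + 1))*Ps) Qs - cz ((Jst + int t)*Ps) Qs)"
      unfolding rz_def by (simp add: add.assoc)
    also have "cz ((Jst + (int t + 1))*Ps) Qs - cz ((Jst + int t)*Ps) Qs
       = (G (int t + 1) - G (int t)) + sg * ((if t = 0 then 1 else 0) + (if t = Ln - 1 then 1 else 0))"
      using f1 f0 tL by (auto simp: algebra_simps)
    also have "G (int t + 1) - G (int t) = int (Wl ! t)" using G tL by simp
    finally have rzv: "rz Ps Qs (Jst + int t) = nat (int (Wl ! t) + sg * ((if t = 0 then 1 else 0) + (if t = Ln - 1 then 1 else 0)))" .
    have pn: "pat ! t = (if t = 0 \<or> t = length Wl - 1 then y else Wl ! t)"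
      by (rule pat_nth(2)[OF pat]) (use tL lenW in simp)
    have w0: "Wl ! 0 = x" using pat(2) by simp
    have "last Wl = x" "Wl \<noteq> []" using pat(2) by simp_all
    then have wl: "Wl ! (Ln - 1) = x" using last_conv_nth[of Wl] lenW by simp
    have ne: "0 \<noteq> Ln - 1" using lenW by simp
    show "pat ! t = rz Ps Qs (Jst + int t)"
    proof (cases "t = 0")
      case True
      then show ?thesis using rzv pn w0 ne xy lenW by simp
    next
      case False
      show ?thesis
      proof (cases "t = Ln - 1")
        case True
        then show ?thesis using rzv pn wl False xy lenW by simp
      next
        case f2: False
        then show ?thesis using rzv pn False lenW by simp
      qed
    qed
  qed
qed

theorem lemma2p5:
  fixes r s :: rat and ms :: "nat list" and n :: nat and S1 S2 :: "nat list"
  assumes "0 < r" and "r < 1" and "\<forall>p::nat. p \<ge> 2 \<longrightarrow> r \<noteq> 1 / of_nat p"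
    and "length ms \<ge> 2" and "\<forall>x\<in>set ms. x > 0" and "last ms \<ge> 2" and "r = cf ms"
    and "n \<ge> 2"
    and "\<exists>j. rotate j (CS r) = S1 @ S2 @ S1 @ S2"
    and "rev S1 = S1" and "rev S2 = S2"
    and "cyc_occ (CS r) S1 = 2" and "cyc_occ (CS r) S2 = 2"
    and "S1 \<noteq> []" and "hd S1 = hd ms + 1" and "last S1 = hd ms + 1"
    and "S2 \<noteq> []" and "hd S2 = hd ms" and "last S2 = hd ms"
  shows "(even (length ms) \<and> cf (ms @ [2*n-2]) < s \<and> s < cf (butlast ms) \<longrightarrow>
            (\<exists>d::nat. 1 \<le> d \<and> d \<le> 2*n-3 \<and>
               cyc_contains (CS s)
                 ([hd ms] @ tl S1 @ concat (replicate d (S2 @ S1)) @ S2 @ butlast S1 @ [hd ms])))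
       \<and> (odd (length ms) \<and> cf (butlast ms) < s \<and> s < cf (ms @ [2*n-2]) \<longrightarrow>
            (\<exists>d::nat. 1 \<le> d \<and> d \<le> 2*n-3 \<and>
               cyc_contains (CS s)
                 ([hd ms + 1] @ tl S2 @ concat (replicate d (S1 @ S2)) @ S1 @ butlast S2 @ [hd ms + 1])))"
proof -
  note A = assms
  obtain NN NN' DD DD' where M: "Mq ms = (NN, NN', DD, DD')" by (cases "Mq ms") auto
  have msne: "ms \<noteq> []" using A(4) by auto
  have cfA: "1 \<le> DD" "cf ms = of_nat NN / of_nat DD" using Mq_cf[OF A(5) M] by auto
  have cfB: "1 \<le> DD'" "cf (butlast ms) = of_nat NN' / of_nat DD'" using Mq_butlast[OF A(5) msne M] by auto
  have det0: "int NN * int DD' - int NN' * int DD = (if even (length ms) then -1 else 1)" using Mq_det[OF M] .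
  have bnd: "NN' < NN" "DD' < DD" "NN < DD" "1 \<le> NN" using Mq_bounds[OF A(5) msne A(6) M] by auto
  have N'1: "1 \<le> NN'" using Mq_B_pos[OF A(5) A(4) M] .
  have hdm: "hd ms = DD div NN" using Mq_hd[OF A(5) A(4) A(6) M] .
  have NDle: "NN' \<le> DD'"
  proof -
    have "cf (butlast ms) \<le> 1" using cf_le1[of "butlast ms"] A(5) by (auto dest: in_set_butlastD)
    then have "of_nat NN' / of_nat DD' \<le> (1::rat)" using cfB by simp
    then show ?thesis using cfB(1) by (simp add: divide_le_eq)
  qed
  define N where "N = int NN"
  define N' where "N' = int NN'"
  define D where "D = int DD"
  define D' where "D' = int DD'"
  have N2: "2 \<le> N"
  proof (rule ccontr)
    assume "\<not> 2 \<le> N"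
    then have "NN = 1" using bnd(4) unfolding N_def by simp
    then have "r = 1 / of_nat DD" using cfA A(7) by simp
    moreover have "DD \<ge> 2" using bnd(3) \<open>NN = 1\<close> by simp
    ultimately show False using A(3) by blast
  qed
  have N0: "0 < N" using N2 by simp
  have det: "D*N' - N*D' = (if even (length ms) then 1 else -1)"
    using det0 unfolding N_def N'_def D_def D'_def by (auto simp: algebra_simps)
  have copDN: "coprime D N"
  proof (rule coprimeI)
    fix k assume k: "k dvd D" "k dvd N"
    then have "k dvd D*N' - N*D'" by simp
    then show "is_unit k" using det by (cases "even (length ms)") auto
  qed
  have rq: "r = of_int N / of_int D" using cfA A(7) unfolding N_def D_def by simp
  have D0: "0 < D" using cfA unfolding D_def by simp
  have qr: "quotient_of r = (N, D)" unfolding rq by (rule quot_eq[OF D0]) (use copDN in \<open>simp add: coprime_commute\<close>)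
  obtain K where CSr: "CS r = map (\<lambda>k. rz D N (K + int k)) [0..<2 * nat N]"
    using CS_form[OF qr A(1) A(2)] by blast
  obtain j where rj: "rotate j (CS r) = S1 @ S2 @ S1 @ S2" using A(9) by blast
  have lenCS: "length (CS r) = 2 * nat N" using CSr by simp
  have len12: "length S1 + length S2 = nat N"
  proof -
    have "length (rotate j (CS r)) = 2 * (length S1 + length S2)" unfolding rj by simp
    then show ?thesis using lenCS by simp
  qed
  have len12i: "int (length S1) + int (length S2) = N" proof -
    have "int (length S1 + length S2) = int (nat N)" using len12 by simp
    then show ?thesis using N0 by simp
  qed
  define T0 where "T0 = K + int j"
  have S1w: "\<forall>t<length S1. S1 ! t = rz D N (T0 + int t)"
  proof (intro allI impI)
    fix t assume t: "t < length S1"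
    have "S1 ! t = rotate j (CS r) ! t" unfolding rj using t by (simp add: nth_append)
    also have "\<dots> = rz D N (T0 + int t)" unfolding T0_def by (rule rot_nth[OF N0 CSr]) (use t len12 in simp)
    finally show "S1 ! t = rz D N (T0 + int t)" .
  qed
  have S2w: "\<forall>t<length S2. S2 ! t = rz D N (T0 + int (length S1) + int t)"
  proof (intro allI impI)
    fix t assume t: "t < length S2"
    have "S2 ! t = rotate j (CS r) ! (length S1 + t)" unfolding rj using t by (simp add: nth_append)
    also have "\<dots> = rz D N (T0 + int (length S1) + int t)" unfolding T0_def
      using rot_nth[OF N0 CSr, of "length S1 + t" j] t len12 by (simp add: add.assoc)
    finally show "S2 ! t = rz D N (T0 + int (length S1) + int t)" .
  qed
  define ls where "ls = (if even (length ms) then N' else N - N')"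
  have lsb: "1 \<le> ls" "ls < N" using bnd N'1 unfolding ls_def N_def N'_def by auto
  have lsD: "(ls * D) mod N = 1"
  proof (cases "even (length ms)")
    case True
    then have "ls * D = 1 + D' * N" unfolding ls_def using det by (simp add: algebra_simps)
    then show ?thesis using N2 by simp
  next
    case False
    then have "ls * D = 1 + (D - D') * N" unfolding ls_def using det by (simp add: algebra_simps)
    then show ?thesis using N2 by simp
  qed
  have mdef: "hd ms = nat (D div N)" unfolding hdm D_def N_def by (metis nat_int zdiv_int)
  have idf: "N dvd T0 \<and> int (length S1) = ls"
    by (rule identify[OF N2 _ copDN lsb lsD CSr S1w S2w len12i A(14) A(17) A(12) A(13)])
       (use D0 A(18) mdef in auto)
  obtain kk where kk: "T0 = N * kk" using idf by blast
  have T0m: "(T0 + x) mod N = x mod N" for x unfolding kk by simp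
  have S1z: "\<forall>t<length S1. S1 ! t = rz D N (int t)"
  proof (intro allI impI)
    fix t assume "t < length S1"
    then have "S1 ! t = rz D N (T0 + int t)" using S1w by simp
    also have "\<dots> = rz D N (int t)" by (rule rz_mod[OF N0, of N]) (use T0m in auto)
    finally show "S1 ! t = rz D N (int t)" .
  qed
  have S2z: "\<forall>t<length S2. S2 ! t = rz D N (ls + int t)"
  proof (intro allI impI)
    fix t assume "t < length S2"
    then have "S2 ! t = rz D N (T0 + int (length S1) + int t)" using S2w by simp
    also have "\<dots> = rz D N (ls + int t)"
    proof (rule rz_mod[OF N0, of N])
      show "(T0 + int (length S1) + int t) mod N = (ls + int t) mod N" using T0m[of "ls + int t"] idf
        by (simp add: add.assoc)
    qed simp
    finally show "S2 ! t = rz D N (ls + int t)" .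
  qed
  define c where "c = 2*n - 2"
  have c2: "2 \<le> c" using A(8) unfolding c_def by simp
  have cfC: "cf (ms @ [c]) = of_nat (c*NN + NN') / of_nat (c*DD + DD')" using Mq_app[OF A(5) _ M] c2 by simp
  have cfC': "cf (ms @ [c]) = of_int (int c*N + N') / of_int (int c*D + D')" unfolding cfC N_def N'_def D_def D'_def
    by simp
  have cfB': "cf (butlast ms) = of_int N' / of_int D'" unfolding cfB N'_def D'_def by simp
  have "0 < int c * D" using D0 c2 by simp
  then have cD0: "0 < int c * D + D'" unfolding D'_def by simp
  have D'0: "0 < D'" using cfB unfolding D'_def by simp
  have N'1i: "1 \<le> N'" using N'1 unfolding N'_def by simp
  have cfCpos: "0 \<le> cf (ms @ [c])" using cf_le1[of "ms @ [c]"] A(5) c2 by auto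
  have cfB1: "cf (butlast ms) \<le> 1" using cf_le1[of "butlast ms"] A(5) by (auto dest: in_set_butlastD)
  have cfC1: "cf (ms @ [c]) < 1"
  proof -
    have "int c * N + N' < int c * D + D'"
    proof (rule add_less_le_mono)
      show "int c * N < int c * D" using bnd(3) c2 unfolding N_def D_def by (intro mult_strict_left_mono) auto
      show "N' \<le> D'" using NDle unfolding N'_def D'_def by simp
    qed
    then have hh: "(of_int (int c*N + N') :: rat) < of_int (int c*D + D')" by (simp only: of_int_less_iff)
    have "(0::rat) < of_int (int c*D + D')" using cD0 by (simp only: of_int_0_less_iff)
    then show ?thesis unfolding cfC' using hh by (simp only: divide_less_eq_1_pos)
  qed
  obtain Qs Ps where qs: "quotient_of s = (Qs, Ps)" by (cases "quotient_of s") auto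
  have sQP: "s = of_int Qs / of_int Ps" using quotient_of_div[OF qs] .
  have Ps0: "0 < Ps" using quotient_of_denom_pos[OF qs] .
  have copQP: "coprime Ps Qs" using quotient_of_coprime[OF qs] by (simp add: coprime_commute)
  have mnat: "hd ms = nat (D div N)" using mdef .
  show ?thesis
  proof (intro conjI impI)
    assume H: "even (length ms) \<and> cf (ms @ [2*n-2]) < s \<and> s < cf (butlast ms)"
    have ev: "even (length ms)" using H by simp
    have detE: "D*N' - N*D' = 1" using det ev by simp
    have l1: "int (length S1) = N'" using idf ev unfolding ls_def by simp
    have h1: "Qs * D' < N' * Ps" using H frac_lt[OF Ps0 D'0, of Qs N'] unfolding cfB' sQP by simp
    have Hc: "cf (ms @ [c]) < s" using H unfolding c_def by simp
    have "of_int (int c*N + N') / of_int (int c*D + D') < (of_int Qs / of_int Ps :: rat)"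
      using Hc unfolding cfC' sQP .
    then have h2: "(int c * N + N') * Ps < Qs * (int c * D + D')"
      using frac_lt[OF cD0 Ps0, of "int c * N + N'" Qs] by simp
    have s0: "0 < s" using H cfCpos unfolding c_def by simp
    have s1: "s < 1" using H cfB1 by simp
    obtain K' where CSs: "CS s = map (\<lambda>k. rz Ps Qs (K' + int k)) [0..<2 * nat Qs]"
      using CS_form[OF qs s0 s1] by blast
    define u where "u = Ps*N' - Qs*D'"
    define v where "v = Qs*D - Ps*N"
    have u1: "1 \<le> u" using h1 unfolding u_def by (simp add: algebra_simps)
    have cvu: "u < int c * v"
    proof -
      have "int c * v - u = Qs * (int c * D + D') - (int c * N + N') * Ps" unfolding u_def v_def by algebra
      then show ?thesis using h2 by simp
    qed
    have v1: "1 \<le> v"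
    proof (rule ccontr)
      assume "\<not> 1 \<le> v"
      then have "int c * v \<le> 0" using c2 by (simp add: mult_nonneg_nonpos)
      then show False using cvu u1 by simp
    qed
    have QsE: "Qs = u*N + v*N'" unfolding u_def v_def using detE by algebra
    have PsE: "Ps = u*D + v*D'" unfolding u_def v_def using detE by algebra
    have "0 < u*N" "0 < v*N'" using u1 v1 N0 N'1i by simp_all
    then have Q0: "0 < Qs" unfolding QsE by (rule add_pos_pos)
    define d where "d = (if v \<le> u then u div v else 1)"
    define e where "e = (if v \<le> u then 1 else v)"
    have deall: "1 \<le> e \<and> e \<le> v \<and> d*v < u + e \<and> u + e \<le> (d+1)*v \<and> 1 \<le> d \<and> d < int c"
    proof (cases "v \<le> u")
      case True
      have v0: "0 < v" using v1 by simp
      have a: "(u div v) * v \<le> u" "u < (u div v + 1) * v" using div_mult_le'[OF v0] lt_div_succ[OF v0] by auto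
      have "1 * v < (u div v + 1) * v" using a True by simp
      then have b: "1 < u div v + 1" using v0 by (simp only: mult_less_cancel_right_pos)
      have "(u div v) * v < int c * v" using a cvu by simp
      then have cc: "u div v < int c" using v0 by (simp only: mult_less_cancel_right_pos)
      show ?thesis using a b cc True v1 by (simp add: d_def e_def)
    next
      case False
      then show ?thesis using u1 c2 v1 by (auto simp: d_def e_def)
    qed
    then have de: "1 \<le> e" "e \<le> v" "d*v < u + e" "u + e \<le> (d+1)*v" "1 \<le> d" "d < int c" by auto
    define dn where "dn = nat d"
    have dn: "int dn = d" using de unfolding dn_def by simp
    define L where "L = (d+1)*N + N'"
    obtain J0 where J0: "\<forall>t. 0 \<le> t \<and> t \<le> L \<longrightarrow>
        cz ((J0+t)*Ps) Qs - cz (J0*Ps) Qs = cz (t*D) N - (if 1 \<le> t then 1 else 0) - (if t = L then 1 else 0)"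
      using pattern_even[OF N2 N'1i detE u1 v1 QsE PsE de(1-4) copQP L_def] by blast
    define X where "X = concat (replicate dn (S2 @ S1))"
    define Wl where "Wl = S1 @ X @ S2 @ S1"
    define pat where "pat = [hd ms] @ tl S1 @ X @ S2 @ butlast S1 @ [hd ms]"
    define mid where "mid = tl S1 @ X @ S2 @ butlast S1"
    have S1hd: "S1 = [hd ms + 1] @ tl S1" using A(14) A(15) by (cases S1) auto
    have S1last: "S1 = butlast S1 @ [hd ms + 1]" using A(14) A(16) by (metis append_butlast_last_id)
    have Wl1: "Wl = [hd ms + 1] @ mid @ [hd ms + 1]" unfolding Wl_def mid_def
      by (metis S1hd S1last append.assoc append_Cons append_Nil)
    have pat1: "pat = [hd ms] @ mid @ [hd ms]" unfolding pat_def mid_def by simp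
    have Wl2: "Wl = concat (replicate (Suc dn) (S1 @ S2)) @ take (length S1) (S1 @ S2)"
    proof -
      have "Wl = (S1 @ X) @ S2 @ S1" unfolding Wl_def by simp
      also have "S1 @ X = concat (replicate dn (S1 @ S2)) @ S1" unfolding X_def by (rule rep_shift)
      finally have "Wl = concat (replicate dn (S1 @ S2) @ [S1 @ S2]) @ S1" by simp
      then show ?thesis by (simp add: replicate_append_same)
    qed
    have Wnth: "\<forall>i<nat N. (S1 @ S2) ! i = rz D N (int i)"
    proof (intro allI impI)
      fix i assume i: "i < nat N"
      show "(S1 @ S2) ! i = rz D N (int i)"
      proof (cases "i < length S1")
        case True then show ?thesis using S1z by (simp add: nth_append)
      next
        case False
        then have "i - length S1 < length S2" using i len12 by simp
        then have "S2 ! (i - length S1) = rz D N (ls + int (i - length S1))" using S2z by simp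
        also have "ls + int (i - length S1) = int i" using idf False by simp
        finally show ?thesis using False by (simp add: nth_append)
      qed
    qed
    have fper: "\<forall>i. rz D N (int (i + nat N)) = rz D N (int i)"
    proof
      fix i
      have "rz D N (int i + 1 * N) = rz D N (int i)" by (rule rz_period[OF N0])
      then show "rz D N (int (i + nat N)) = rz D N (int i)" using N0 by simp
    qed
    have lenWl: "length Wl = Suc dn * nat N + length S1" unfolding Wl2 using len12 by (simp add: len_cr del: replicate_Suc)
    have Wlv: "\<forall>t<length Wl. Wl ! t = rz D N (int t)"
    proof (intro allI impI)
      fix t assume "t < length Wl"
      then show "Wl ! t = rz D N (int t)" unfolding Wl2
        using W_nth[of "S1 @ S2" "nat N" "length S1" "\<lambda>i. rz D N (int i)" t "Suc dn"] Wnth fper len12 lenWl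
        by (simp add: Wl2)
    qed
    have LWl: "int (length Wl) = L" unfolding lenWl L_def using l1 dn N0 by (simp add: algebra_simps)
    have "cyc_contains (CS s) pat"
    proof (rule finish_gen[OF Q0 CSs _ _ refl _ _ pat1 Wl1, where sg = "-1" and Jst = J0 and G = "\<lambda>t. cz (t*D) N"])
      show "\<forall>t. 0 \<le> t \<and> t \<le> int (length Wl) \<longrightarrow> cz ((J0+t)*Ps) Qs - cz (J0*Ps) Qs
                 = cz (t*D) N + (-1) * ((if 1 \<le> t then 1 else 0) + (if t = int (length Wl) then 1 else 0))"
        using J0 LWl by simp
      show "\<forall>t<length Wl. cz ((int t + 1)*D) N - cz (int t * D) N = int (Wl ! t)"
      proof (intro allI impI)
        fix t assume t: "t < length Wl"
        have "0 \<le> cz ((int t + 1)*D) N - cz (int t * D) N"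
          using cz_mono[OF N0, of "int t * D" "(int t + 1)*D"] D0 by (simp add: algebra_simps)
        then show "cz ((int t + 1)*D) N - cz (int t * D) N = int (Wl ! t)" using Wlv t unfolding rz_def by simp
      qed
      have "nat N \<le> Suc dn * nat N" by simp
      moreover have "2 \<le> nat N" using N2 by simp
      ultimately show "2 \<le> length Wl" unfolding lenWl by linarith
      have du: "d \<le> u"
      proof (cases "v \<le> u")
        case True
        have v0: "0 < v" using v1 by simp
        have "0 \<le> u div v" using u1 v0 by (simp add: pos_imp_zdiv_nonneg_iff)
        then have "(u div v) * 1 \<le> (u div v) * v" using v1 by (intro mult_left_mono) auto
        then show ?thesis using div_mult_le'[OF v0, of u] True by (simp add: d_def)
      next
        case False then show ?thesis using u1 by (simp add: d_def)
      qed
      have "(d+1)*N \<le> (2*u)*N" using du u1 N0 by (intro mult_right_mono) auto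
      moreover have "N' * 1 \<le> N' * (2*v)" using v1 N'1i by (intro mult_left_mono) auto
      ultimately have "L \<le> 2 * Qs" unfolding L_def QsE by (simp add: algebra_simps)
      then show "length Wl \<le> 2 * nat Qs" using LWl Q0 by simp
      show "int (hd ms) = int (hd ms + 1) + -1" by simp
    qed
    moreover have "pat = [hd ms] @ tl S1 @ concat (replicate dn (S2 @ S1)) @ S2 @ butlast S1 @ [hd ms]"
      unfolding pat_def X_def ..
    moreover have "1 \<le> dn" "dn \<le> 2*n-3" using de dn unfolding c_def by auto
    ultimately show "\<exists>d::nat. 1 \<le> d \<and> d \<le> 2*n-3 \<and>
               cyc_contains (CS s) ([hd ms] @ tl S1 @ concat (replicate d (S2 @ S1)) @ S2 @ butlast S1 @ [hd ms])"
      by blast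
  next
    assume H: "odd (length ms) \<and> cf (butlast ms) < s \<and> s < cf (ms @ [2*n-2])"
    have od: "odd (length ms)" using H by simp
    have detO: "D*N' - N*D' = -1" using det od by simp
    have lsO: "ls = N - N'" using od unfolding ls_def by simp
    have l1: "int (length S1) = N - N'" using idf lsO by simp
    have l2: "int (length S2) = N'" using l1 len12i by simp
    have h1: "N' * Ps < Qs * D'" using H frac_lt[OF D'0 Ps0, of N' Qs] unfolding cfB' sQP by simp
    have Hc: "s < cf (ms @ [c])" using H unfolding c_def by simp
    have "(of_int Qs / of_int Ps :: rat) < of_int (int c*N + N') / of_int (int c*D + D')"
      using Hc unfolding cfC' sQP .
    then have h2: "Qs * (int c * D + D') < (int c * N + N') * Ps"
      using frac_lt[OF Ps0 cD0, of Qs "int c * N + N'"] by simp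
    have s0: "0 < s"
    proof -
      have "0 \<le> cf (butlast ms)" using cf_le1[of "butlast ms"] A(5) by (auto dest: in_set_butlastD)
      then show ?thesis using H by simp
    qed
    have s1: "s < 1" using Hc cfC1 by simp
    obtain K' where CSs: "CS s = map (\<lambda>k. rz Ps Qs (K' + int k)) [0..<2 * nat Qs]"
      using CS_form[OF qs s0 s1] by blast
    define u where "u = Qs*D' - Ps*N'"
    define v where "v = Ps*N - Qs*D"
    have u1: "1 \<le> u" using h1 unfolding u_def by (simp add: algebra_simps)
    have cvu: "u < int c * v"
    proof -
      have "int c * v - u = (int c * N + N') * Ps - Qs * (int c * D + D')" unfolding u_def v_def by algebra
      then show ?thesis using h2 by simp
    qed
    have v1: "1 \<le> v"
    proof (rule ccontr)
      assume "\<not> 1 \<le> v"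
      then have "int c * v \<le> 0" using c2 by (simp add: mult_nonneg_nonpos)
      then show False using cvu u1 by simp
    qed
    have QsE: "Qs = u*N + v*N'" unfolding u_def v_def using detO by algebra
    have PsE: "Ps = u*D + v*D'" unfolding u_def v_def using detO by algebra
    have "0 < u*N" "0 < v*N'" using u1 v1 N0 N'1i by simp_all
    then have Q0: "0 < Qs" unfolding QsE by (rule add_pos_pos)
    define d where "d = (if v \<le> u then u div v else 1)"
    define e where "e = (if v \<le> u then 0 else v - u)"
    have deall: "0 \<le> e \<and> e < v \<and> d*v \<le> u + e \<and> u + e < (d+1)*v \<and> 1 \<le> d \<and> d < int c"
    proof (cases "v \<le> u")
      case True
      have v0: "0 < v" using v1 by simp
      have a: "(u div v) * v \<le> u" "u < (u div v + 1) * v" using div_mult_le'[OF v0] lt_div_succ[OF v0] by auto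
      have "1 * v < (u div v + 1) * v" using a True by simp
      then have b: "1 < u div v + 1" using v0 by (simp only: mult_less_cancel_right_pos)
      have "(u div v) * v < int c * v" using a cvu by simp
      then have cc: "u div v < int c" using v0 by (simp only: mult_less_cancel_right_pos)
      show ?thesis using a b cc True v1 by (simp add: d_def e_def)
    next
      case False
      then show ?thesis using u1 c2 v1 by (auto simp: d_def e_def)
    qed
    then have de: "0 \<le> e" "e < v" "d*v \<le> u + e" "u + e < (d+1)*v" "1 \<le> d" "d < int c" by auto
    define dn where "dn = nat d"
    have dn: "int dn = d" using de unfolding dn_def by simp
    define L where "L = (d+1)*N + N'"
    obtain J0 where J0: "\<forall>t. 0 \<le> t \<and> t \<le> L \<longrightarrow>
        cz ((J0+t)*Ps) Qs - cz (J0*Ps) Qs = cz (((N - N') + t)*D) N - cz ((N - N')*D) N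
        + (if 1 \<le> t then 1 else 0) + (if t = L then 1 else 0)"
      using pattern_odd[OF N2 N'1i detO u1 v1 QsE PsE de(1-4) copQP L_def] by blast
    define X where "X = concat (replicate dn (S1 @ S2))"
    define Wl where "Wl = S2 @ X @ S1 @ S2"
    define pat where "pat = [hd ms + 1] @ tl S2 @ X @ S1 @ butlast S2 @ [hd ms + 1]"
    define mid where "mid = tl S2 @ X @ S1 @ butlast S2"
    have S2hd: "S2 = [hd ms] @ tl S2" using A(17) A(18) by (cases S2) auto
    have S2last: "S2 = butlast S2 @ [hd ms]" using A(17) A(19) by (metis append_butlast_last_id)
    have Wl1: "Wl = [hd ms] @ mid @ [hd ms]" unfolding Wl_def mid_def
      by (metis S2hd S2last append.assoc append_Cons append_Nil)
    have pat1: "pat = [hd ms + 1] @ mid @ [hd ms + 1]" unfolding pat_def mid_def by simp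
    have Wl2: "Wl = concat (replicate (Suc dn) (S2 @ S1)) @ take (length S2) (S2 @ S1)"
    proof -
      have "Wl = (S2 @ X) @ S1 @ S2" unfolding Wl_def by simp
      also have "S2 @ X = concat (replicate dn (S2 @ S1)) @ S2" unfolding X_def by (rule rep_shift)
      finally have "Wl = concat (replicate dn (S2 @ S1) @ [S2 @ S1]) @ S2" by simp
      then show ?thesis by (simp add: replicate_append_same)
    qed
    have Wnth: "\<forall>i<nat N. (S2 @ S1) ! i = rz D N (ls + int i)"
    proof (intro allI impI)
      fix i assume i: "i < nat N"
      show "(S2 @ S1) ! i = rz D N (ls + int i)"
      proof (cases "i < length S2")
        case True then show ?thesis using S2z by (simp add: nth_append)
      next
        case False
        then have i1: "i - length S2 < length S1" using i len12 by simp
        then have "S1 ! (i - length S2) = rz D N (int (i - length S2))" using S1z by simp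
        also have "\<dots> = rz D N (int (i - length S2) + 1 * N)" by (rule rz_period[OF N0, symmetric])
        also have "int (i - length S2) + 1 * N = ls + int i" using False l2 lsO by simp
        finally show ?thesis using False by (simp add: nth_append)
      qed
    qed
    have fper: "\<forall>i. rz D N (ls + int (i + nat N)) = rz D N (ls + int i)"
    proof
      fix i
      have "rz D N ((ls + int i) + 1 * N) = rz D N (ls + int i)" by (rule rz_period[OF N0])
      then show "rz D N (ls + int (i + nat N)) = rz D N (ls + int i)" using N0 by (simp add: add.assoc)
    qed
    have len21: "length S2 + length S1 = nat N" using len12 by simp
    have lenWl: "length Wl = Suc dn * nat N + length S2" unfolding Wl2 using len21
      by (simp add: len_cr del: replicate_Suc)
    have Wlv: "\<forall>t<length Wl. Wl ! t = rz D N (ls + int t)"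
    proof (intro allI impI)
      fix t assume "t < length Wl"
      then show "Wl ! t = rz D N (ls + int t)" unfolding Wl2
        using W_nth[of "S2 @ S1" "nat N" "length S2" "\<lambda>i. rz D N (ls + int i)" t "Suc dn"] Wnth fper len12 lenWl
        by (simp add: Wl2)
    qed
    have LWl: "int (length Wl) = L" unfolding lenWl L_def using l2 dn N0 by (simp add: algebra_simps)
    have "cyc_contains (CS s) pat"
    proof (rule finish_gen[OF Q0 CSs _ _ refl _ _ pat1 Wl1, where sg = "1" and Jst = J0
          and G = "\<lambda>t. cz (((N - N') + t)*D) N - cz ((N - N')*D) N"])
      show "\<forall>t. 0 \<le> t \<and> t \<le> int (length Wl) \<longrightarrow> cz ((J0+t)*Ps) Qs - cz (J0*Ps) Qs
                 = (cz (((N - N') + t)*D) N - cz ((N - N')*D) N) + 1 * ((if 1 \<le> t then 1 else 0) + (if t = int (length Wl) then 1 else 0))"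
        using J0 LWl by simp
      show "\<forall>t<length Wl. (cz (((N - N') + (int t + 1))*D) N - cz ((N - N')*D) N)
               - (cz (((N - N') + int t)*D) N - cz ((N - N')*D) N) = int (Wl ! t)"
      proof (intro allI impI)
        fix t assume t: "t < length Wl"
        have e1: "((N - N') + (int t + 1))*D = (ls + int t + 1) * D" using lsO by simp
        have e2: "((N - N') + int t)*D = (ls + int t) * D" using lsO by simp
        have "0 \<le> cz ((ls + int t + 1)*D) N - cz ((ls + int t) * D) N"
          using cz_mono[OF N0, of "(ls + int t) * D" "(ls + int t + 1)*D"] D0 by (simp add: algebra_simps)
        then show "(cz (((N - N') + (int t + 1))*D) N - cz ((N - N')*D) N)
               - (cz (((N - N') + int t)*D) N - cz ((N - N')*D) N) = int (Wl ! t)"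
          using Wlv t unfolding e1 e2 rz_def by simp
      qed
      have "nat N \<le> Suc dn * nat N" by simp
      moreover have "2 \<le> nat N" using N2 by simp
      ultimately show "2 \<le> length Wl" unfolding lenWl by linarith
      have du: "d \<le> u"
      proof (cases "v \<le> u")
        case True
        have v0: "0 < v" using v1 by simp
        have "0 \<le> u div v" using u1 v0 by (simp add: pos_imp_zdiv_nonneg_iff)
        then have "(u div v) * 1 \<le> (u div v) * v" using v1 by (intro mult_left_mono) auto
        then show ?thesis using div_mult_le'[OF v0, of u] True by (simp add: d_def)
      next
        case False then show ?thesis using u1 by (simp add: d_def)
      qed
      have "(d+1)*N \<le> (2*u)*N" using du u1 N0 by (intro mult_right_mono) auto
      moreover have "N' * 1 \<le> N' * (2*v)" using v1 N'1i by (intro mult_left_mono) auto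
      ultimately have "L \<le> 2 * Qs" unfolding L_def QsE by (simp add: algebra_simps)
      then show "length Wl \<le> 2 * nat Qs" using LWl Q0 by simp
      show "int (hd ms + 1) = int (hd ms) + 1" by simp
    qed
    moreover have "pat = [hd ms + 1] @ tl S2 @ concat (replicate dn (S1 @ S2)) @ S1 @ butlast S2 @ [hd ms + 1]"
      unfolding pat_def X_def ..
    moreover have "1 \<le> dn" "dn \<le> 2*n-3" using de dn unfolding c_def by auto
    ultimately show "\<exists>d::nat. 1 \<le> d \<and> d \<le> 2*n-3 \<and>
               cyc_contains (CS s) ([hd ms + 1] @ tl S2 @ concat (replicate d (S1 @ S2)) @ S1 @ butlast S2 @ [hd ms + 1])"
      by blast
  qed
qed


end
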